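(* Let $\phi\in\mathrm{Rat}(\mathbb{U})$ have degree $d>0$, let $z\in\mathbb{U}$ be a regular value of $\phi_e$, and let $f\in H^2$. Then: (a) If $\phi(\infty)\neq\infty$ and $z\neq 1/\overline{\phi(\infty)}$, then $$(C_\phi^* f)(z)=\frac{f(0)}{1-\overline{\phi(\infty)}\,z}+z\sum_{w\in\phi_e^{-1}(\{z\})}\frac{f(w)}{w\,\phi_e'(w)}.$$ (b) If $\phi(\infty)=\infty$, then $(C_\phi^* f)(z)=z\sum_{w\in\phi_e^{-1}(\{z\})}\frac{f(w)}{w\,\phi_e'(w)}$ if $z\neq0$, and $(C_\phi^*f)(0)=f(0)$.
   Context: $\mathbb{U}$ is the open unit disc and $\hat{\mathbb{C}}$ the Riemann sphere. $\mathrm{Rat}(\mathbb{U})$ is the set of rational functions of one complex variable mapping $\mathbb{U}$ into itself, regarded as maps $\hat{\mathbb{C}}\to\hat{\mathbb{C}}$ (so $\phi(\infty)\in\hat{\mathbb{C}}$ is defined; $1/\overline{\phi(\infty)}$ is interpreted as $\infty$ when $\phi(\infty)=0$). The degree of a rational function $p/q$ (relatively prime polynomials) is $\max(\deg p,\deg q)$. $\rho(z)=1/\overline{z}$ is inversion in the unit circle on $\hat{\mathbb{C}}$, and $\phi_e:=\rho\circ\phi\circ\rho$ (a rational function of the same degree as $\phi$, with $\phi_e^{-1}(\mathbb{U})\subset\mathbb{U}$). A point $z$ is a regular value of a rational function $R$ of degree $d$ if $R^{-1}(\{z\})$ consists of $d$ distinct points. $H^2$ is the Hardy space of holomorphic functions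 $f(z)=\sum_{n\ge0}\hat f(n)z^n$ on $\mathbb{U}$ with $\|f\|^2=\sum|\hat f(n)|^2<\infty$ and inner product $\langle f,g\rangle=\sum\hat f(n)\overline{\hat g(n)}$. $C_\phi f=f\circ\phi$ is the composition operator on $H^2$ and $C_\phi^*$ its Hilbert-space adjoint. *)

theory Defs
  imports "HOL-Analysis.Analysis" "HOL-Computational_Algebra.Polynomial"
begin

text \<open>The Riemann sphere is modelled as complex option: None is the point at infinity.\<close>

definition rho :: "complex option \<Rightarrow> complex option" where
  "rho x = (case x of None \<Rightarrow> Some 0
                    | Some w \<Rightarrow> (if w = 0 then None else Some (1 / cnj w)))"

text \<open>The rational function p/q (p, q coprime, q nonzero) as a map of the Riemann sphere.\<close>
definition rat_eval :: "complex poly \<Rightarrow> complex poly \<Rightarrow> complex option \<Rightarrow> complex option" where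
  "rat_eval p q x = (case x of
      None \<Rightarrow> (if degree q < degree p then None
               else if degree p = degree q then Some (lead_coeff p / lead_coeff q)
               else Some 0)
    | Some w \<Rightarrow> (if poly q w = 0 then None else Some (poly p w / poly q w)))"

definition rat_degree :: "complex poly \<Rightarrow> complex poly \<Rightarrow> nat" where
  "rat_degree p q = max (degree p) (degree q)"

definition in_RatU :: "complex poly \<Rightarrow> complex poly \<Rightarrow> bool" where
  "in_RatU p q \<longleftrightarrow> q \<noteq> 0 \<and> coprime p q \<and>
     (\<forall>z. cmod z < 1 \<longrightarrow> poly q z \<noteq> 0 \<and> cmod (poly p z / poly q z) < 1)"

definition phi_e :: "complex poly \<Rightarrow> complex poly \<Rightarrow> complex option \<Rightarrow> complex option" where
  "phi_e p q = rho \<circ> rat_eval p q \<circ> rho"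

text \<open>phi_e viewed as a complex function (value 0 at its poles; only used near
  points where phi_e is finite, e.g. for derivatives).\<close>
definition phi_e_c :: "complex poly \<Rightarrow> complex poly \<Rightarrow> complex \<Rightarrow> complex" where
  "phi_e_c p q w = (case phi_e p q (Some w) of Some v \<Rightarrow> v | None \<Rightarrow> 0)"

definition regular_value :: "(complex option \<Rightarrow> complex option) \<Rightarrow> nat \<Rightarrow> complex option \<Rightarrow> bool" where
  "regular_value R d z \<longleftrightarrow> finite (R -` {z}) \<and> card (R -` {z}) = d"

definition h2_coeff :: "(complex \<Rightarrow> complex) \<Rightarrow> nat \<Rightarrow> complex" where
  "h2_coeff f n = (deriv ^^ n) f 0 / fact n"

definition H2 :: "(complex \<Rightarrow> complex) set" where
  "H2 = {f. f holomorphic_on ball 0 1 \<and> summable (\<lambda>n. (cmod (h2_coeff f n))\<^sup>2)}"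

definition h2_inner :: "(complex \<Rightarrow> complex) \<Rightarrow> (complex \<Rightarrow> complex) \<Rightarrow> complex" where
  "h2_inner f g = (\<Sum>n. h2_coeff f n * cnj (h2_coeff g n))"

definition comp_op :: "complex poly \<Rightarrow> complex poly \<Rightarrow> (complex \<Rightarrow> complex) \<Rightarrow> (complex \<Rightarrow> complex)" where
  "comp_op p q h = (\<lambda>w. h (poly p w / poly q w))"

text \<open>Adjoint of C_phi; the representative is normalised to vanish off the disc.\<close>
definition comp_adj :: "complex poly \<Rightarrow> complex poly \<Rightarrow> (complex \<Rightarrow> complex) \<Rightarrow> (complex \<Rightarrow> complex)" where
  "comp_adj p q f = (THE g. g \<in> H2 \<and> (\<forall>w. 1 \<le> cmod w \<longrightarrow> g w = 0) \<and>
      (\<forall>h\<in>H2. h2_inner (comp_op p q h) f = h2_inner h g))"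

end

theory Submission
  imports Defs "HOL-Complex_Analysis.Complex_Analysis"
begin


definition cis2 :: "real \<Rightarrow> complex" where
  "cis2 t = exp (2 * of_real pi * \<i> * of_real t)"

lemma norm_cis2[simp]: "cmod (cis2 t) = 1"
  unfolding cis2_def by (simp add: norm_exp_eq_Re)

lemma cis2_nz[simp]: "cis2 t \<noteq> 0"
  unfolding cis2_def by simp

lemma cnj_cis2: "cnj (cis2 t) = inverse (cis2 t)"
  unfolding cis2_def by (simp add: exp_cnj exp_minus[symmetric])

lemma continuous_on_cis2[continuous_intros]: "continuous_on A cis2"
  unfolding cis2_def by (intro continuous_intros)

lemma circlepath0: "circlepath 0 r t = of_real r * cis2 t"
  unfolding circlepath cis2_def by simp

lemma cis2_pow: "cis2 t ^ m = exp (2 * of_real pi * \<i> * of_nat m * of_real t)"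
  unfolding cis2_def by (simp add: exp_of_nat_mult[symmetric] algebra_simps)

lemma integral_exp_int:
  fixes k :: int
  assumes "k \<noteq> 0"
  shows "((\<lambda>t. exp (2 * of_real pi * \<i> * of_int k * of_real t)) has_integral 0) {0..1::real}"
proof -
  define c where "c = 2 * of_real pi * \<i> * (of_int k :: complex)"
  have c0: "c \<noteq> 0" using assms by (simp add: c_def)
  have "((\<lambda>t. exp (c * of_real t)) has_integral (exp (c * of_real 1) / c - exp (c * of_real 0) / c)) {0..1::real}"
  proof (rule fundamental_theorem_of_calculus)
    fix x :: real assume "x \<in> {0..1}"
    have "((\<lambda>w. exp (c * w) / c) has_field_derivative (c * exp (c * of_real x)) / c) (at (of_real x))"
      by (auto intro!: derivative_eq_intros)
    from has_vector_derivative_real_field[OF this]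
    show "((\<lambda>t. exp (c * of_real t) / c) has_vector_derivative exp (c * of_real x)) (at x within {0..1})"
      using c0 by simp
  qed simp
  moreover have "exp c = 1" unfolding c_def
    using exp_integer_2pi[of "of_int k"] by (simp add: algebra_simps)
  ultimately show ?thesis by (simp add: c_def mult.assoc)
qed

lemma cis2_orth:
  "((\<lambda>t. cis2 t ^ m * cnj (cis2 t) ^ n) has_integral (if m = n then 1 else 0)) {0..1::real}"
proof -
  have eq: "cis2 t ^ m * cnj (cis2 t) ^ n = exp (2 * of_real pi * \<i> * of_int (int m - int n) * of_real t)" for t
  proof -
    have "cnj (cis2 t) ^ n = exp (- (2 * of_real pi * \<i> * of_nat n * of_real t))"
      by (simp add: cnj_cis2 cis2_pow power_inverse exp_minus)
    thus ?thesis by (simp add: cis2_pow exp_add[symmetric] algebra_simps)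
  qed
  show ?thesis
  proof (cases "m = n")
    case True
    thus ?thesis using has_integral_const_real[of "1::complex" 0 1]
      by (simp add: cnj_cis2 power_inverse field_simps)
  next
    case False
    hence "int m - int n \<noteq> 0" by simp
    from integral_exp_int[OF this] show ?thesis using False by (simp add: eq)
  qed
qed

lemma coef_integral:
  fixes v :: "complex \<Rightarrow> complex"
  assumes holo: "v holomorphic_on ball 0 R" and s: "0 < s" "s < R"
  shows "((\<lambda>t. v (of_real s * cis2 t) * cnj (cis2 t) ^ n) has_integral (of_real s ^ n * h2_coeff v n)) {0..1}"
proof -
  have "continuous_on (cball 0 s) v"
  proof (rule continuous_on_subset[OF holomorphic_on_imp_continuous_on[OF holo]])
    show "cball 0 s \<subseteq> ball 0 R" using s by auto
  qed
  moreover have "v holomorphic_on ball 0 s" by (rule holomorphic_on_subset[OF holo]) (use s in auto)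
  ultimately have "((\<lambda>u. v u / (u - 0) ^ Suc n) has_contour_integral
        complex_of_real (2 * pi) * \<i> / fact n * (deriv ^^ n) v 0) (circlepath 0 s)"
    using s by (intro Cauchy_has_contour_integral_higher_derivative_circlepath) auto
  hence I: "((\<lambda>t. v (circlepath 0 s t) / (circlepath 0 s t) ^ Suc n * vector_derivative (circlepath 0 s) (at t within {0..1}))
      has_integral (complex_of_real (2 * pi) * \<i> * h2_coeff v n)) {0..1}"
    unfolding has_contour_integral_def h2_coeff_def by simp
  have I2: "((\<lambda>t. (complex_of_real (2 * pi) * \<i> / of_real s ^ n) * (v (of_real s * cis2 t) * cnj (cis2 t) ^ n))
      has_integral (complex_of_real (2 * pi) * \<i> * h2_coeff v n)) {0..1}"
  proof (rule has_integral_spike_finite[OF _ _ I, of "{}"])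
    fix t :: real assume t: "t \<in> {0..1} - {}"
    show "(complex_of_real (2 * pi) * \<i> / of_real s ^ n) * (v (of_real s * cis2 t) * cnj (cis2 t) ^ n) =
       v (circlepath 0 s t) / (circlepath 0 s t) ^ Suc n * vector_derivative (circlepath 0 s) (at t within {0..1})"
    proof -
      have vd: "vector_derivative (circlepath 0 s) (at t within {0..1}) = complex_of_real (2 * pi) * \<i> * of_real s * cis2 t"
        using t by (simp add: vector_derivative_circlepath01 cis2_def)
      define e where "e = cis2 t"
      have e0: "e \<noteq> 0" by (simp add: e_def)
      have s0: "complex_of_real s \<noteq> 0" using s by simp
      have "(complex_of_real (2 * pi) * \<i> / of_real s ^ n) * (v (of_real s * e) * inverse e ^ n) =
         v (of_real s * e) / (of_real s * e) ^ Suc n * (complex_of_real (2 * pi) * \<i> * of_real s * e)"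
        using e0 s0 by (simp add: power_mult_distrib divide_simps)
      thus ?thesis unfolding vd circlepath0 cnj_cis2 e_def .
    qed
  qed simp
  define c where "c = complex_of_real (2 * pi) * \<i> / of_real s ^ n"
  have c0: "c \<noteq> 0" using s by (simp add: c_def)
  have eqv: "complex_of_real (2 * pi) * \<i> * h2_coeff v n = c * (of_real s ^ n * h2_coeff v n)"
    using s by (simp add: c_def)
  have "((\<lambda>t. inverse c * (c * (v (of_real s * cis2 t) * cnj (cis2 t) ^ n))) has_integral
      inverse c * (c * (of_real s ^ n * h2_coeff v n))) {0..1}"
    using has_integral_mult_right[OF I2[unfolded c_def[symmetric] eqv], of "inverse c"] .
  thus ?thesis using c0 by (simp add: mult.assoc[symmetric])
qed

lemma h2_ps:
  assumes "v holomorphic_on ball 0 R" "cmod w < R"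
  shows "(\<lambda>n. h2_coeff v n * w ^ n) sums v w"
  using holomorphic_power_series[OF assms(1), of w] assms(2) by (simp add: h2_coeff_def)

lemma h2_abs_summ:
  assumes "v holomorphic_on ball 0 R" "0 \<le> \<rho>" "\<rho> < R"
  shows "summable (\<lambda>n. cmod (h2_coeff v n) * \<rho> ^ n)"
proof -
  define \<rho>' where "\<rho>' = (\<rho> + R) / 2"
  have "cmod (of_real \<rho>') < R" unfolding norm_of_real \<rho>'_def using assms by auto
  hence sm: "(\<lambda>n. h2_coeff v n * of_real \<rho>' ^ n) sums v (of_real \<rho>')"
    by (intro h2_ps[OF assms(1)])
  have "summable (\<lambda>n. norm (h2_coeff v n * (of_real \<rho>) ^ n))"
  proof (rule powser_insidea[of _ "of_real \<rho>'"])
    show "norm (of_real \<rho> :: complex) < norm (of_real \<rho>' :: complex)"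
      unfolding norm_of_real \<rho>'_def using assms by auto
  qed (use sm sums_summable in blast)
  thus ?thesis using assms(2) by (simp add: norm_mult norm_power)
qed

lemma integral_series:
  fixes x :: "nat \<Rightarrow> real \<Rightarrow> complex"
  assumes cont: "\<And>m. continuous_on {0..1} (x m)"
    and bound: "\<And>m t. t \<in> {0..1} \<Longrightarrow> cmod (x m t) \<le> M m"
    and summ: "summable M"
    and sms: "\<And>t. t \<in> {0..1} \<Longrightarrow> (\<lambda>m. x m t) sums X t"
  shows "(\<lambda>m. integral {0..1} (x m)) sums integral {0..1} X"
proof -
  have M0: "M m \<ge> 0" for m using bound[of 0 m] by (meson norm_ge_zero order_trans atLeastAtMost_iff zero_le_one order_refl)
  define f where "f k t = (\<Sum>m<k. x m t)" for k t
  have fi: "f k integrable_on {0..1}" for k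
    unfolding f_def by (intro integrable_continuous_real continuous_intros cont)
  have "(\<lambda>k. integral {0..1} (f k)) \<longlonglongrightarrow> integral {0..1} X"
  proof (rule dominated_convergence(2)[OF fi, of "\<lambda>t. suminf M"])
    show "(\<lambda>t. suminf M) integrable_on {0..1::real}" by (rule integrable_continuous_real) (rule continuous_on_const)
    fix k t assume t: "t \<in> {0..1::real}"
    have "cmod (f k t) \<le> (\<Sum>m<k. M m)" unfolding f_def
      by (rule order_trans[OF norm_sum sum_mono[OF bound[OF t]]])
    also have "\<dots> \<le> suminf M" using summ M0 by (intro sum_le_suminf) auto
    finally show "norm (f k t) \<le> suminf M" by simp
  next
    fix t :: real assume "t \<in> {0..1}"
    thus "(\<lambda>k. f k t) \<longlonglongrightarrow> X t" using sms unfolding sums_def f_def by blast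
  qed
  moreover have "integral {0..1} (f k) = (\<Sum>m<k. integral {0..1} (x m))" for k
    unfolding f_def by (intro integral_sum) (auto intro: integrable_continuous_real cont)
  ultimately show ?thesis unfolding sums_def by simp
qed

lemma continuous_on_circ:
  assumes "v holomorphic_on ball 0 R" "0 \<le> s" "s < R"
  shows "continuous_on A (\<lambda>t. v (of_real s * cis2 t))"
proof -
  have "continuous_on UNIV (\<lambda>t. of_real s * cis2 t)" by (intro continuous_intros)
  moreover have "continuous_on ((\<lambda>t. of_real s * cis2 t) ` UNIV) v"
    using holomorphic_on_imp_continuous_on[OF assms(1)] 
    by (rule continuous_on_subset) (use assms in \<open>auto simp: norm_mult\<close>)
  ultimately have "continuous_on UNIV (v \<circ> (\<lambda>t. of_real s * cis2 t))" by (rule continuous_on_compose)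
  thus ?thesis unfolding o_def by (rule continuous_on_subset) simp
qed

lemma bound_circ:
  assumes "v holomorphic_on ball 0 R" "0 \<le> s" "s < R"
  shows "cmod (v (of_real s * cis2 t)) \<le> (\<Sum>n. cmod (h2_coeff v n) * s ^ n)"
proof -
  have sm: "(\<lambda>n. h2_coeff v n * (of_real s * cis2 t) ^ n) sums v (of_real s * cis2 t)"
    using assms by (intro h2_ps[OF assms(1)]) (simp add: norm_mult)
  have "summable (\<lambda>n. norm (h2_coeff v n * (of_real s * cis2 t) ^ n))"
    using h2_abs_summ[OF assms] assms(2) by (simp add: norm_mult norm_power)
  from summable_norm[OF this] sm show ?thesis
    using assms(2) by (simp add: sums_iff norm_mult norm_power)
qed

lemma parseval:
  assumes u: "u holomorphic_on ball 0 R1" and v: "v holomorphic_on ball 0 R2"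
    and r: "0 < r" "r < R1" and s: "0 < s" "s < R2"
  shows "(\<lambda>n. h2_coeff u n * cnj (h2_coeff v n) * of_real (r ^ n * s ^ n)) sums
           integral {0..1} (\<lambda>t. u (of_real r * cis2 t) * cnj (v (of_real s * cis2 t)))"
proof -
  define B where "B = (\<Sum>n. cmod (h2_coeff v n) * s ^ n)"
  define x where "x m t = h2_coeff u m * (of_real r * cis2 t) ^ m * cnj (v (of_real s * cis2 t))" for m t
  have "(\<lambda>m. integral {0..1} (x m)) sums integral {0..1} (\<lambda>t. u (of_real r * cis2 t) * cnj (v (of_real s * cis2 t)))"
  proof (rule integral_series)
    fix m show "continuous_on {0..1} (x m)" unfolding x_def
      by (intro continuous_intros continuous_on_circ[OF v]) (use s in auto)
  next
    fix m t assume "t \<in> {0..1::real}"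
    have "cmod (x m t) = cmod (h2_coeff u m) * r ^ m * cmod (v (of_real s * cis2 t))"
      unfolding x_def using r by (simp add: norm_mult norm_power)
    also have "\<dots> \<le> cmod (h2_coeff u m) * r ^ m * B"
      unfolding B_def using bound_circ[OF v] s r by (intro mult_left_mono) auto
    finally show "cmod (x m t) \<le> cmod (h2_coeff u m) * r ^ m * B" .
  next
    show "summable (\<lambda>m. cmod (h2_coeff u m) * r ^ m * B)"
      using h2_abs_summ[OF u] r by (intro summable_mult2) auto
  next
    fix t :: real assume "t \<in> {0..1}"
    have "(\<lambda>m. h2_coeff u m * (of_real r * cis2 t) ^ m) sums u (of_real r * cis2 t)"
      using r by (intro h2_ps[OF u]) (simp add: norm_mult)
    thus "(\<lambda>m. x m t) sums (u (of_real r * cis2 t) * cnj (v (of_real s * cis2 t)))"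
      unfolding x_def by (rule sums_mult2)
  qed
  moreover have "integral {0..1} (x m) = h2_coeff u m * cnj (h2_coeff v m) * of_real (r ^ m * s ^ m)" for m
  proof -
    have "x m = (\<lambda>t. (h2_coeff u m * of_real r ^ m) * cnj (v (of_real s * cis2 t) * cnj (cis2 t) ^ m))"
      unfolding x_def by (auto simp: power_mult_distrib)
    hence "integral {0..1} (x m) = (h2_coeff u m * of_real r ^ m) * cnj (integral {0..1} (\<lambda>t. v (of_real s * cis2 t) * cnj (cis2 t) ^ m))"
      by (simp only: integral_mult_right integral_cnj)
    also have "integral {0..1} (\<lambda>t. v (of_real s * cis2 t) * cnj (cis2 t) ^ m) = of_real s ^ m * h2_coeff v m"
      using coef_integral[OF v s] by (rule integral_unique)
    finally show ?thesis by simp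
  qed
  ultimately show ?thesis by simp
qed



definition hn :: "(complex \<Rightarrow> complex) \<Rightarrow> real" where
  "hn u = (\<Sum>n. (cmod (h2_coeff u n))\<^sup>2)"

definition Mr :: "(complex \<Rightarrow> complex) \<Rightarrow> real \<Rightarrow> real" where
  "Mr u r = integral {0..1} (\<lambda>t. (cmod (u (of_real r * cis2 t)))\<^sup>2)"

lemma Mr_series:
  assumes u: "u holomorphic_on ball 0 R" and r: "0 < r" "r < R"
  shows "(\<lambda>n. (cmod (h2_coeff u n))\<^sup>2 * r ^ (2 * n)) sums Mr u r"
proof -
  have P: "(\<lambda>n. h2_coeff u n * cnj (h2_coeff u n) * of_real (r ^ n * r ^ n)) sums
           integral {0..1} (\<lambda>t. u (of_real r * cis2 t) * cnj (u (of_real r * cis2 t)))"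
    by (rule parseval[OF u u r r])
  have e1: "h2_coeff u n * cnj (h2_coeff u n) * of_real (r ^ n * r ^ n) = of_real ((cmod (h2_coeff u n))\<^sup>2 * r ^ (2 * n))" for n
  proof -
    have a: "h2_coeff u n * cnj (h2_coeff u n) = of_real ((cmod (h2_coeff u n))\<^sup>2)"
      using complex_norm_square by metis
    have b: "r ^ n * r ^ n = r ^ (2*n)" by (simp add: power_add[symmetric] mult_2)
    show ?thesis unfolding a b by simp
  qed
  have cont: "continuous_on {0..1} (\<lambda>t. (cmod (u (of_real r * cis2 t)))\<^sup>2)"
    by (intro continuous_intros continuous_on_circ[OF u]) (use r in auto)
  have "((\<lambda>t. (cmod (u (of_real r * cis2 t)))\<^sup>2) has_integral Mr u r) {0..1}"
    unfolding Mr_def using integrable_continuous_real[OF cont] by (rule integrable_integral)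
  from has_integral_of_real[OF this]
  have I: "integral {0..1} (\<lambda>t. complex_of_real ((cmod (u (of_real r * cis2 t)))\<^sup>2)) = of_real (Mr u r)"
    by (rule integral_unique)
  have "(\<lambda>t. u (of_real r * cis2 t) * cnj (u (of_real r * cis2 t))) = (\<lambda>t. complex_of_real ((cmod (u (of_real r * cis2 t)))\<^sup>2))"
    by (rule ext) (metis complex_norm_square)
  with I have I2: "integral {0..1} (\<lambda>t. u (of_real r * cis2 t) * cnj (u (of_real r * cis2 t))) = of_real (Mr u r)"
    by simp
  show ?thesis using P unfolding e1 I2 sums_of_real_iff .
qed

lemma Mr_nonneg: "Mr u r \<ge> 0"
  unfolding Mr_def by (cases "(\<lambda>t. (cmod (u (of_real r * cis2 t)))\<^sup>2) integrable_on {0..1::real}")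
    (auto intro: integral_nonneg simp: not_integrable_integral)

lemma H2_of_Mr_bound:
  assumes u: "u holomorphic_on ball 0 1" and B: "\<And>r. 0 < r \<Longrightarrow> r < 1 \<Longrightarrow> Mr u r \<le> B"
  shows "u \<in> H2" "hn u \<le> B"
proof -
  have part: "(\<Sum>n<N. (cmod (h2_coeff u n))\<^sup>2) \<le> B" for N
  proof -
    have ev: "eventually (\<lambda>r. (\<Sum>n<N. (cmod (h2_coeff u n))\<^sup>2 * r ^ (2 * n)) \<le> B) (at_left (1::real))"
    proof (rule eventually_mono)
      show "eventually (\<lambda>x. x \<in> {0<..<1}) (at_left (1::real))" by (rule eventually_at_left_real) simp
    next
      fix r :: real assume r: "r \<in> {0<..<1}"
      have "(\<lambda>n. (cmod (h2_coeff u n))\<^sup>2 * r ^ (2 * n)) sums Mr u r" using r by (intro Mr_series[OF u]) auto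
      hence S: "Mr u r = (\<Sum>n. (cmod (h2_coeff u n))\<^sup>2 * r ^ (2 * n))" "summable (\<lambda>n. (cmod (h2_coeff u n))\<^sup>2 * r ^ (2 * n))"
        by (auto simp: sums_iff)
      have "(\<Sum>n<N. (cmod (h2_coeff u n))\<^sup>2 * r ^ (2 * n)) \<le> Mr u r"
        unfolding S(1) by (rule sum_le_suminf[OF S(2)]) (use r in auto)
      also have "\<dots> \<le> B" using B r by auto
      finally show "(\<Sum>n<N. (cmod (h2_coeff u n))\<^sup>2 * r ^ (2 * n)) \<le> B" .
    qed
    have lim: "((\<lambda>r. (\<Sum>n<N. (cmod (h2_coeff u n))\<^sup>2 * r ^ (2 * n))) \<longlongrightarrow> (\<Sum>n<N. (cmod (h2_coeff u n))\<^sup>2 * 1 ^ (2 * n))) (at_left (1::real))"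
      by (intro tendsto_intros)
    from tendsto_le[OF _ tendsto_const lim ev] show ?thesis by simp
  qed
  have sm: "summable (\<lambda>n. (cmod (h2_coeff u n))\<^sup>2)"
    by (rule summableI_nonneg_bounded[OF _ part]) simp
  thus "u \<in> H2" using u unfolding H2_def by simp
  show "hn u \<le> B" unfolding hn_def using sm part by (rule suminf_le_const)
qed

lemma Mr_le_hn:
  assumes "u \<in> H2" "0 < r" "r < 1"
  shows "Mr u r \<le> hn u"
proof -
  have u: "u holomorphic_on ball 0 1" and sm: "summable (\<lambda>n. (cmod (h2_coeff u n))\<^sup>2)"
    using assms(1) unfolding H2_def by auto
  have "Mr u r = (\<Sum>n. (cmod (h2_coeff u n))\<^sup>2 * r ^ (2 * n))"
    using Mr_series[OF u assms(2,3)] by (simp add: sums_iff)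
  also have "\<dots> \<le> hn u" unfolding hn_def
  proof (rule suminf_le)
    fix n show "(cmod (h2_coeff u n))\<^sup>2 * r ^ (2 * n) \<le> (cmod (h2_coeff u n))\<^sup>2"
      using assms by (intro mult_left_le) (auto intro: power_le_one)
  qed (use Mr_series[OF u assms(2,3)] sm in \<open>auto simp: sums_iff\<close>)
  finally show ?thesis .
qed

lemma Mr_mono:
  assumes u: "u holomorphic_on ball 0 1" and w: "w holomorphic_on ball 0 1" and r: "0 < r" "r < 1"
    and le: "\<And>t. cmod (u (of_real r * cis2 t)) \<le> cmod (w (of_real r * cis2 t))"
  shows "Mr u r \<le> Mr w r"
  unfolding Mr_def
proof (rule integral_le)
  show "(\<lambda>t. (cmod (u (of_real r * cis2 t)))\<^sup>2) integrable_on {0..1}"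
    by (intro integrable_continuous_real continuous_intros continuous_on_circ[OF u]) (use r in auto)
  show "(\<lambda>t. (cmod (w (of_real r * cis2 t)))\<^sup>2) integrable_on {0..1}"
    by (intro integrable_continuous_real continuous_intros continuous_on_circ[OF w]) (use r in auto)
qed (use le in \<open>auto intro: power_mono\<close>)

lemma h2_coeff_0: "h2_coeff u 0 = u 0"
  by (simp add: h2_coeff_def)

lemma Mr_const_plus:
  assumes U: "U holomorphic_on ball 0 1" and U0: "U 0 = 0" and r: "0 < r" "r < 1"
  shows "Mr (\<lambda>w. a + U w) r = (cmod a)\<^sup>2 + Mr U r"
proof -
  define F where "F = (\<lambda>t. U (of_real r * cis2 t))"
  have cF: "continuous_on {0..1} F" unfolding F_def by (intro continuous_on_circ[OF U]) (use r in auto)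
  have IF: "(F has_integral 0) {0..1}"
    using coef_integral[OF U r, of 0] U0 by (simp add: F_def h2_coeff_0)
  have pt: "complex_of_real ((cmod (a + F t))\<^sup>2) = of_real ((cmod a)\<^sup>2) + of_real ((cmod (F t))\<^sup>2) + (cnj a * F t + a * cnj (F t))" for t
    unfolding complex_norm_square by (simp add: algebra_simps)
  have i1: "((\<lambda>t. (cmod (F t))\<^sup>2) has_integral Mr U r) {0..1}"
    unfolding Mr_def F_def by (intro integrable_integral integrable_continuous_real continuous_intros continuous_on_circ[OF U]) (use r in auto)
  have "((\<lambda>t. of_real ((cmod a)\<^sup>2) + of_real ((cmod (F t))\<^sup>2) + (cnj a * F t + a * cnj (F t))) has_integral
         (of_real ((cmod a)\<^sup>2) + of_real (Mr U r) + (cnj a * 0 + a * cnj 0))) {0..1}"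
  proof (intro has_integral_add has_integral_of_real i1 has_integral_mult_right)
    show "((\<lambda>x. (cmod a)\<^sup>2) has_integral (cmod a)\<^sup>2) {0..1::real}"
      using has_integral_const_real[of "(cmod a)\<^sup>2" "0::real" "1::real"] by simp
    show "(F has_integral 0) {0..1}" by (rule IF)
    show "((\<lambda>x. cnj (F x)) has_integral cnj 0) {0..1}"
      using IF has_integral_cnj[of F 0 "{0..1}"] by (simp add: o_def)
  qed
  hence "((\<lambda>t. complex_of_real ((cmod (a + F t))\<^sup>2)) has_integral of_real ((cmod a)\<^sup>2 + Mr U r)) {0..1}"
    unfolding pt by simp
  hence "((\<lambda>t. Re (complex_of_real ((cmod (a + F t))\<^sup>2))) has_integral Re (of_real ((cmod a)\<^sup>2 + Mr U r))) {0..1}"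
    by (rule has_integral_Re)
  hence "((\<lambda>t. (cmod (a + F t))\<^sup>2) has_integral ((cmod a)\<^sup>2 + Mr U r)) {0..1}" by simp
  thus ?thesis unfolding Mr_def F_def by (rule integral_unique)
qed



lemma Mr_cong:
  assumes "\<And>w. cmod w < 1 \<Longrightarrow> f w = g w" "0 < r" "r < 1"
  shows "Mr f r = Mr g r"
  unfolding Mr_def using assms by (simp add: norm_mult)

lemma circ_max:
  assumes th: "\<theta> holomorphic_on ball 0 1" "\<And>w. cmod w < 1 \<Longrightarrow> cmod (\<theta> w) < 1"
    and r: "0 < r" "r < 1"
  obtains \<rho> where "\<rho> < 1" "0 \<le> \<rho>" "\<And>t. t \<in> {0..1} \<Longrightarrow> cmod (\<theta> (of_real r * cis2 t)) \<le> \<rho>"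
proof -
  have c: "continuous_on {0..1} (\<lambda>t. cmod (\<theta> (of_real r * cis2 t)))"
    by (intro continuous_intros continuous_on_circ[OF th(1)]) (use r in auto)
  obtain t0 where t0: "t0 \<in> {0..1::real}" "\<And>t. t \<in> {0..1} \<Longrightarrow> cmod (\<theta> (of_real r * cis2 t)) \<le> cmod (\<theta> (of_real r * cis2 t0))"
    using continuous_attains_sup[OF compact_Icc _ c] by fastforce
  show ?thesis
  proof (rule that[of "cmod (\<theta> (of_real r * cis2 t0))"])
    show "cmod (\<theta> (of_real r * cis2 t0)) < 1" using th(2) r by (simp add: norm_mult)
  qed (use t0 in auto)
qed

definition trunc :: "(complex \<Rightarrow> complex) \<Rightarrow> nat \<Rightarrow> complex \<Rightarrow> complex" where
  "trunc k N w = (\<Sum>n<N. h2_coeff k n * w ^ n)"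

lemma Mr_comp_limit:
  assumes k: "k holomorphic_on ball 0 1"
    and th: "\<theta> holomorphic_on ball 0 1" "\<And>w. cmod w < 1 \<Longrightarrow> cmod (\<theta> w) < 1"
    and r: "0 < r" "r < 1"
    and bnd: "\<And>N. Mr (\<lambda>w. trunc k N (\<theta> w)) r \<le> B"
  shows "Mr (\<lambda>w. k (\<theta> w)) r \<le> B"
proof -
  obtain \<rho> where rho: "\<rho> < 1" "0 \<le> \<rho>" "\<And>t. t \<in> {0..1} \<Longrightarrow> cmod (\<theta> (of_real r * cis2 t)) \<le> \<rho>"
    using circ_max[OF th r] by blast
  define C where "C = (\<Sum>n. cmod (h2_coeff k n) * \<rho> ^ n)"
  have smC: "summable (\<lambda>n. cmod (h2_coeff k n) * \<rho> ^ n)" by (rule h2_abs_summ[OF k rho(2,1)])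
  have cth: "continuous_on {0..1} (\<lambda>t. \<theta> (of_real r * cis2 t))"
    by (intro continuous_on_circ[OF th(1)]) (use r in auto)
  have "(\<lambda>N. Mr (\<lambda>w. trunc k N (\<theta> w)) r) \<longlonglongrightarrow> Mr (\<lambda>w. k (\<theta> w)) r"
    unfolding Mr_def
  proof (rule dominated_convergence(2)[where h = "\<lambda>t. C\<^sup>2"])
    fix N
    show "(\<lambda>t. (cmod (trunc k N (\<theta> (of_real r * cis2 t))))\<^sup>2) integrable_on {0..1}"
      unfolding trunc_def by (intro integrable_continuous_real continuous_intros cth)
  next
    show "(\<lambda>t. C\<^sup>2) integrable_on {0..1::real}" by (rule integrable_continuous_real) (rule continuous_on_const)
  next
    fix N and t :: real assume t: "t \<in> {0..1}"
    have "cmod (trunc k N (\<theta> (of_real r * cis2 t))) \<le> (\<Sum>n<N. cmod (h2_coeff k n) * \<rho> ^ n)"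
      unfolding trunc_def
      by (rule order_trans[OF norm_sum sum_mono])
         (use rho(3)[OF t] rho(2) in \<open>auto simp: norm_mult norm_power intro!: mult_left_mono power_mono\<close>)
    also have "\<dots> \<le> C" unfolding C_def by (rule sum_le_suminf[OF smC]) (use rho(2) in auto)
    finally have "cmod (trunc k N (\<theta> (of_real r * cis2 t))) \<le> C" .
    thus "norm ((cmod (trunc k N (\<theta> (of_real r * cis2 t))))\<^sup>2) \<le> C\<^sup>2"
      by (simp add: power_mono)
  next
    fix t :: real assume t: "t \<in> {0..1}"
    have "(\<lambda>n. h2_coeff k n * (\<theta> (of_real r * cis2 t)) ^ n) sums k (\<theta> (of_real r * cis2 t))"
      by (rule h2_ps[OF k]) (use th(2) r in \<open>simp add: norm_mult\<close>)
    hence "(\<lambda>N. trunc k N (\<theta> (of_real r * cis2 t))) \<longlonglongrightarrow> k (\<theta> (of_real r * cis2 t))"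
      unfolding sums_def trunc_def .
    thus "(\<lambda>N. (cmod (trunc k N (\<theta> (of_real r * cis2 t))))\<^sup>2) \<longlonglongrightarrow> (cmod (k (\<theta> (of_real r * cis2 t))))\<^sup>2"
      by (intro tendsto_intros)
  qed
  thus ?thesis using bnd by (intro tendsto_le[OF _ tendsto_const]) auto
qed

lemma holo_comp_ball:
  assumes "k holomorphic_on ball 0 1" "\<theta> holomorphic_on ball 0 1" "\<And>w. cmod w < 1 \<Longrightarrow> cmod (\<theta> w) < 1"
  shows "(\<lambda>w. k (\<theta> w)) holomorphic_on ball 0 1"
proof -
  have "(k \<circ> \<theta>) holomorphic_on ball 0 1"
    by (rule holomorphic_on_compose_gen[OF assms(2,1)]) (use assms(3) in auto)
  thus ?thesis by (simp add: o_def)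
qed

lemma littlewood_poly:
  assumes th: "\<theta> holomorphic_on ball 0 1" "\<And>w. cmod w < 1 \<Longrightarrow> cmod (\<theta> w) < 1" "\<theta> 0 = 0"
    and r: "0 < r" "r < 1"
  shows "Mr (\<lambda>w. \<Sum>n<N. a n * (\<theta> w) ^ n) r \<le> (\<Sum>n<N. (cmod (a n))\<^sup>2)"
proof (induction N arbitrary: a)
  case 0
  show ?case by (simp add: Mr_def)
next
  case (Suc N)
  define V where "V w = (\<Sum>n<N. a (Suc n) * (\<theta> w) ^ n)" for w
  define U where "U w = \<theta> w * V w" for w
  have Vh: "V holomorphic_on ball 0 1" unfolding V_def by (intro holomorphic_intros th(1))
  have Uh: "U holomorphic_on ball 0 1" unfolding U_def by (intro holomorphic_intros th(1) Vh)
  have eq: "(\<lambda>w. \<Sum>n<Suc N. a n * (\<theta> w) ^ n) = (\<lambda>w. a 0 + U w)"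
    by (rule ext, simp only: sum.lessThan_Suc_shift) (simp add: U_def V_def sum_distrib_left algebra_simps)
  have "Mr (\<lambda>w. a 0 + U w) r = (cmod (a 0))\<^sup>2 + Mr U r"
    by (rule Mr_const_plus[OF Uh]) (use th(3) r in \<open>auto simp: U_def\<close>)
  also have "Mr U r \<le> Mr V r"
  proof (rule Mr_mono[OF Uh Vh r])
    fix t
    have "cmod (\<theta> (of_real r * cis2 t)) \<le> 1" using th(2)[of "of_real r * cis2 t"] r by (simp add: norm_mult)
    thus "cmod (U (of_real r * cis2 t)) \<le> cmod (V (of_real r * cis2 t))"
      unfolding U_def norm_mult by (simp add: mult_left_le_one_le)
  qed
  also have "Mr V r \<le> (\<Sum>n<N. (cmod (a (Suc n)))\<^sup>2)"
    unfolding V_def by (rule Suc.IH)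
  finally show ?case unfolding eq by (simp only: sum.lessThan_Suc_shift)
qed

lemma littlewood0:
  assumes th: "\<theta> holomorphic_on ball 0 1" "\<And>w. cmod w < 1 \<Longrightarrow> cmod (\<theta> w) < 1" "\<theta> 0 = 0"
    and k: "k \<in> H2" and r: "0 < r" "r < 1"
  shows "Mr (\<lambda>w. k (\<theta> w)) r \<le> hn k"
proof -
  have kh: "k holomorphic_on ball 0 1" and sm: "summable (\<lambda>n. (cmod (h2_coeff k n))\<^sup>2)"
    using k unfolding H2_def by auto
  show ?thesis
  proof (rule Mr_comp_limit[OF kh th(1,2) r])
    fix N
    have "Mr (\<lambda>w. trunc k N (\<theta> w)) r \<le> (\<Sum>n<N. (cmod (h2_coeff k n))\<^sup>2)"
      unfolding trunc_def by (rule littlewood_poly[OF th r])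
    also have "\<dots> \<le> hn k" unfolding hn_def by (rule sum_le_suminf[OF sm]) auto
    finally show "Mr (\<lambda>w. trunc k N (\<theta> w)) r \<le> hn k" .
  qed
qed



definition dst :: "nat \<Rightarrow> nat \<Rightarrow> nat" where
  "dst n m = (if m \<le> n then n - m else m - n)"

lemma dst_sym: "dst n m = dst m n" unfolding dst_def by auto

lemma geom_dst_sum:
  fixes \<rho> :: real
  assumes "0 \<le> \<rho>" "\<rho> < 1"
  shows "(\<Sum>m<N. \<rho> ^ dst n m) \<le> (1 + \<rho>) / (1 - \<rho>)"
proof -
  define A where "A = {m. m < N \<and> m \<le> n}"
  define B where "B = {m. m < N \<and> n < m}"
  have fin: "finite A" "finite B" unfolding A_def B_def by auto
  have split: "{..<N} = A \<union> B" "A \<inter> B = {}" unfolding A_def B_def by auto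
  have geo: "summable (\<lambda>j. \<rho> ^ j)" "(\<Sum>j. \<rho> ^ j) = 1 / (1 - \<rho>)"
    using assms by (auto simp: summable_geometric suminf_geometric)
  have SA: "(\<Sum>m\<in>A. \<rho> ^ dst n m) \<le> 1 / (1 - \<rho>)"
  proof -
    have "(\<Sum>m\<in>A. \<rho> ^ dst n m) = (\<Sum>m\<in>A. \<rho> ^ (n - m))" by (rule sum.cong) (auto simp: A_def dst_def)
    also have "\<dots> = (\<Sum>j\<in>(\<lambda>m. n - m) ` A. \<rho> ^ j)"
      by (rule sum.reindex[symmetric, unfolded o_def]) (auto simp: inj_on_def A_def)
    also have "\<dots> \<le> (\<Sum>j. \<rho> ^ j)" by (rule sum_le_suminf[OF geo(1)]) (use fin assms in auto)
    finally show ?thesis using geo by simp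
  qed
  have SB: "(\<Sum>m\<in>B. \<rho> ^ dst n m) \<le> \<rho> / (1 - \<rho>)"
  proof -
    have "(\<Sum>m\<in>B. \<rho> ^ dst n m) = (\<Sum>m\<in>B. \<rho> * \<rho> ^ (m - n - 1))"
      by (rule sum.cong) (auto simp: B_def dst_def power_Suc[symmetric] Suc_diff_Suc)
    also have "\<dots> = \<rho> * (\<Sum>j\<in>(\<lambda>m. m - n - 1) ` B. \<rho> ^ j)"
      by (subst sum.reindex) (auto simp: inj_on_def B_def sum_distrib_left)
    also have "\<dots> \<le> \<rho> * (\<Sum>j. \<rho> ^ j)"
      by (intro mult_left_mono sum_le_suminf[OF geo(1)]) (use fin assms in auto)
    finally show ?thesis using geo by simp
  qed
  have "(\<Sum>m<N. \<rho> ^ dst n m) = (\<Sum>m\<in>A. \<rho> ^ dst n m) + (\<Sum>m\<in>B. \<rho> ^ dst n m)"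
    unfolding split(1) by (rule sum.union_disjoint[OF fin split(2)])
  also have "\<dots> \<le> 1 / (1 - \<rho>) + \<rho> / (1 - \<rho>)" using SA SB by simp
  also have "\<dots> = (1 + \<rho>) / (1 - \<rho>)" by (simp add: add_divide_distrib)
  finally show ?thesis .
qed

lemma schur_bound:
  fixes \<rho> :: real and c :: "nat \<Rightarrow> complex" and T :: "nat \<Rightarrow> nat \<Rightarrow> complex"
  assumes "0 \<le> \<rho>" "\<rho> < 1" and T: "\<And>n m. cmod (T n m) \<le> \<rho> ^ dst n m"
  shows "cmod (\<Sum>n<N. \<Sum>m<N. c n * cnj (c m) * T n m) \<le> (1 + \<rho>) / (1 - \<rho>) * (\<Sum>n<N. (cmod (c n))\<^sup>2)"
proof -
  define K where "K = (1 + \<rho>) / (1 - \<rho>)"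
  have G: "(\<Sum>m<N. \<rho> ^ dst n m) \<le> K" for n unfolding K_def by (rule geom_dst_sum[OF assms(1,2)])
  have "cmod (\<Sum>n<N. \<Sum>m<N. c n * cnj (c m) * T n m) \<le> (\<Sum>n<N. \<Sum>m<N. cmod (c n) * cmod (c m) * \<rho> ^ dst n m)"
    apply (rule order_trans[OF norm_sum sum_mono])
    apply (rule order_trans[OF norm_sum sum_mono])
    by (auto simp: norm_mult intro!: mult_left_mono T)
  also have "\<dots> \<le> (\<Sum>n<N. \<Sum>m<N. ((cmod (c n))\<^sup>2 / 2) * \<rho> ^ dst n m) + (\<Sum>n<N. \<Sum>m<N. ((cmod (c m))\<^sup>2 / 2) * \<rho> ^ dst n m)"
  proof -
    have "cmod (c n) * cmod (c m) * \<rho> ^ dst n m \<le> ((cmod (c n))\<^sup>2 / 2) * \<rho> ^ dst n m + ((cmod (c m))\<^sup>2 / 2) * \<rho> ^ dst n m" for n m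
    proof -
      have "cmod (c n) * cmod (c m) \<le> (cmod (c n))\<^sup>2 / 2 + (cmod (c m))\<^sup>2 / 2"
        using sum_squares_bound[of "cmod (c n)" "cmod (c m)"] by (simp add: field_simps)
      hence "cmod (c n) * cmod (c m) * \<rho> ^ dst n m \<le> ((cmod (c n))\<^sup>2 / 2 + (cmod (c m))\<^sup>2 / 2) * \<rho> ^ dst n m"
        using assms(1) by (intro mult_right_mono) auto
      thus ?thesis by (simp add: algebra_simps)
    qed
    thus ?thesis by (simp add: sum.distrib[symmetric] sum_mono)
  qed
  finally have calc: "cmod (\<Sum>n<N. \<Sum>m<N. c n * cnj (c m) * T n m) \<le> (\<Sum>n<N. \<Sum>m<N. ((cmod (c n))\<^sup>2 / 2) * \<rho> ^ dst n m) + (\<Sum>n<N. \<Sum>m<N. ((cmod (c m))\<^sup>2 / 2) * \<rho> ^ dst n m)" .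
  have SW: "(\<Sum>n<N. \<Sum>m<N. ((cmod (c m))\<^sup>2 / 2) * \<rho> ^ dst n m) = (\<Sum>m<N. \<Sum>n<N. ((cmod (c m))\<^sup>2 / 2) * \<rho> ^ dst m n)"
    by (subst sum.swap) (simp add: dst_sym)
  have B1: "(\<Sum>n<N. \<Sum>m<N. ((cmod (c n))\<^sup>2 / 2) * \<rho> ^ dst n m) \<le> (\<Sum>n<N. ((cmod (c n))\<^sup>2 / 2) * K)"
  proof (rule sum_mono)
    fix n
    have "(\<Sum>m<N. ((cmod (c n))\<^sup>2 / 2) * \<rho> ^ dst n m) = ((cmod (c n))\<^sup>2 / 2) * (\<Sum>m<N. \<rho> ^ dst n m)"
      by (rule sum_distrib_left[symmetric])
    also have "\<dots> \<le> ((cmod (c n))\<^sup>2 / 2) * K" by (rule mult_left_mono[OF G]) simp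
    finally show "(\<Sum>m<N. ((cmod (c n))\<^sup>2 / 2) * \<rho> ^ dst n m) \<le> ((cmod (c n))\<^sup>2 / 2) * K" .
  qed
  have B2: "(\<Sum>m<N. \<Sum>n<N. ((cmod (c m))\<^sup>2 / 2) * \<rho> ^ dst m n) \<le> (\<Sum>m<N. ((cmod (c m))\<^sup>2 / 2) * K)"
  proof (rule sum_mono)
    fix m
    have "(\<Sum>n<N. ((cmod (c m))\<^sup>2 / 2) * \<rho> ^ dst m n) = ((cmod (c m))\<^sup>2 / 2) * (\<Sum>n<N. \<rho> ^ dst m n)"
      by (rule sum_distrib_left[symmetric])
    also have "\<dots> \<le> ((cmod (c m))\<^sup>2 / 2) * K" by (rule mult_left_mono[OF G]) simp
    finally show "(\<Sum>n<N. ((cmod (c m))\<^sup>2 / 2) * \<rho> ^ dst m n) \<le> ((cmod (c m))\<^sup>2 / 2) * K" .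
  qed
  have E: "(\<Sum>n<N. ((cmod (c n))\<^sup>2 / 2) * K) + (\<Sum>n<N. ((cmod (c n))\<^sup>2 / 2) * K) = K * (\<Sum>n<N. (cmod (c n))\<^sup>2)"
    by (simp add: sum_distrib_left sum_distrib_right sum.distrib[symmetric] field_simps)
  from calc B1 B2 SW E show ?thesis unfolding K_def[symmetric] by linarith
qed



definition mob :: "complex \<Rightarrow> complex \<Rightarrow> complex" where
  "mob a w = (a - w) / (1 - cnj a * w)"

lemma mult_lt1: "0 \<le> (x::real) \<Longrightarrow> x < 1 \<Longrightarrow> 0 \<le> y \<Longrightarrow> y < 1 \<Longrightarrow> x * y < 1"
  using mult_left_le[of y x] by linarith

lemma mob_den:
  assumes "cmod a * cmod w < 1" shows "1 - cnj a * w \<noteq> 0"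
proof
  assume "1 - cnj a * w = 0"
  hence "cnj a * w = 1" by simp
  hence "cmod (cnj a * w) = 1" by simp
  with assms show False by (simp add: norm_mult)
qed

lemma mob_norm_identity:
  "(cmod (1 - cnj a * w))\<^sup>2 - (cmod (a - w))\<^sup>2 = (1 - (cmod a)\<^sup>2) * (1 - (cmod w)\<^sup>2)"
proof -
  have "complex_of_real ((cmod (1 - cnj a * w))\<^sup>2 - (cmod (a - w))\<^sup>2) =
        complex_of_real ((1 - (cmod a)\<^sup>2) * (1 - (cmod w)\<^sup>2))"
    unfolding of_real_diff of_real_mult complex_norm_square of_real_1
    by (simp add: algebra_simps)
  thus ?thesis by (simp only: of_real_eq_iff)
qed

lemma mob_lt1:
  assumes "cmod a < 1" "cmod w < 1" shows "cmod (mob a w) < 1"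
proof -
  have d: "1 - cnj a * w \<noteq> 0" using assms by (intro mob_den) (simp add: mult_lt1)
  have "(1 - (cmod a)\<^sup>2) * (1 - (cmod w)\<^sup>2) > 0"
    using assms by (intro mult_pos_pos) (auto simp: power_less_one_iff abs_square_less_1)
  hence "(cmod (a - w))\<^sup>2 < (cmod (1 - cnj a * w))\<^sup>2" using mob_norm_identity[of a w] by linarith
  hence "cmod (a - w) < cmod (1 - cnj a * w)" by (rule power_less_imp_less_base) simp
  thus ?thesis using d by (simp add: mob_def norm_divide divide_less_eq)
qed

lemma mob_eq1:
  assumes "cmod a < 1" "cmod w = 1" shows "cmod (mob a w) = 1"
proof -
  have d: "1 - cnj a * w \<noteq> 0" using assms by (intro mob_den) simp
  have "(cmod (a - w))\<^sup>2 = (cmod (1 - cnj a * w))\<^sup>2" using mob_norm_identity[of a w] assms by simp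
  hence "cmod (a - w) = cmod (1 - cnj a * w)" by (simp add: power2_eq_iff_nonneg)
  thus ?thesis using d by (simp add: mob_def norm_divide)
qed

lemma mob_invol:
  assumes "cmod a < 1" "cmod w < 1" shows "mob a (mob a w) = w"
proof -
  define D where "D = 1 - cnj a * w"
  have d: "D \<noteq> 0" unfolding D_def using assms by (intro mob_den) (simp add: mult_lt1)
  have aa: "1 - cnj a * a \<noteq> 0" using mob_den[of a a] assms by (simp add: mult_lt1)
  have num: "a - (a - w) / D = (w - a * cnj a * w) / D" using d by (simp add: D_def field_simps)
  have den: "1 - cnj a * ((a - w) / D) = (1 - cnj a * a) / D" using d by (simp add: D_def field_simps)
  have "mob a (mob a w) = ((w - a * cnj a * w) / D) / ((1 - cnj a * a) / D)"
    unfolding mob_def[of a "mob a w"] unfolding mob_def D_def[symmetric] num den ..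
  also have "\<dots> = (w - a * cnj a * w) / (1 - cnj a * a)"
    using d by (cases "1 - cnj a * a = 0") (simp_all add: divide_simps)
  also have "w - a * cnj a * w = w * (1 - cnj a * a)" by (simp add: algebra_simps)
  also have "w * (1 - cnj a * a) / (1 - cnj a * a) = w" using aa by simp
  finally show ?thesis .
qed

lemma mob_0[simp]: "mob a 0 = a" by (simp add: mob_def)
lemma mob_a[simp]: "mob a a = 0" by (simp add: mob_def)

lemma mob_holo:
  assumes "cmod a < 1"
  shows "mob a holomorphic_on ball 0 (2 / (1 + cmod a))"
proof -
  have "1 - cnj a * w \<noteq> 0" if "w \<in> ball 0 (2 / (1 + cmod a))" for w
  proof (rule mob_den)
    have "cmod w < 2 / (1 + cmod a)" using that by simp
    hence "cmod a * cmod w \<le> cmod a * (2 / (1 + cmod a))" by (intro mult_left_mono) auto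
    also have "\<dots> = (2 * cmod a) / (1 + cmod a)" by simp
    also have "\<dots> < 1" 
    proof -
      have pos: "0 < 1 + cmod a" by (intro add_pos_nonneg) auto
      show ?thesis using assms by (subst pos_divide_less_eq[OF pos]) auto
    qed
    finally show "cmod a * cmod w < 1" .
  qed
  thus ?thesis unfolding mob_def[abs_def] by (intro holomorphic_intros) auto
qed



lemma mob_R:
  assumes "cmod a < 1" shows "1 < 2 / (1 + cmod a)"
proof -
  have pos: "0 < 1 + cmod a" by (intro add_pos_nonneg) auto
  show ?thesis using assms by (subst less_divide_eq) (use pos in auto)
qed

lemma mob_holo1: assumes "cmod a < 1" shows "mob a holomorphic_on ball 0 1"
  by (rule holomorphic_on_subset[OF mob_holo[OF assms]]) (use mob_R[OF assms] in auto)

lemma cont_mob_circ: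
  assumes "cmod a < 1"
  shows "continuous_on A (\<lambda>t. mob a (cis2 t))"
  using continuous_on_circ[OF mob_holo[OF assms], of 1 A] mob_R[OF assms] by simp

lemma T_bound:
  assumes a: "cmod a < 1"
  shows "cmod (integral {0..1} (\<lambda>t. mob a (cis2 t) ^ n * cnj (mob a (cis2 t)) ^ m)) \<le> cmod a ^ dst n m"
proof -
  have main: "integral {0..1} (\<lambda>t. mob a (cis2 t) ^ n * cnj (mob a (cis2 t)) ^ m) = a ^ (n - m)" if "m \<le> n" for n m
  proof -
    have e: "mob a (cis2 t) ^ n * cnj (mob a (cis2 t)) ^ m = mob a (cis2 t) ^ (n - m)" for t
    proof -
      have "mob a (cis2 t) * cnj (mob a (cis2 t)) = 1"
        using mob_eq1[OF a, of "cis2 t"] complex_norm_square[of "mob a (cis2 t)"] by simp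
      moreover have "mob a (cis2 t) ^ n = mob a (cis2 t) ^ (n - m) * mob a (cis2 t) ^ m"
        using that by (simp add: power_add[symmetric])
      ultimately show ?thesis by (simp add: mult.assoc power_mult_distrib[symmetric])
    qed
    have hv: "(\<lambda>w. mob a w ^ (n - m)) holomorphic_on ball 0 (2 / (1 + cmod a))"
      by (intro holomorphic_intros mob_holo[OF a, unfolded o_def])
    have "((\<lambda>t. mob a (of_real 1 * cis2 t) ^ (n - m) * cnj (cis2 t) ^ 0) has_integral (of_real 1 ^ 0 * h2_coeff (\<lambda>w. mob a w ^ (n - m)) 0)) {0..1}"
      by (rule coef_integral[OF hv]) (use mob_R[OF a] in auto)
    hence "((\<lambda>t. mob a (cis2 t) ^ (n - m)) has_integral a ^ (n - m)) {0..1}"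
      by (simp add: h2_coeff_0)
    thus ?thesis unfolding e by (rule integral_unique)
  qed
  show ?thesis
  proof (cases "m \<le> n")
    case True thus ?thesis by (simp add: main dst_def norm_power)
  next
    case False
    have "integral {0..1} (\<lambda>t. mob a (cis2 t) ^ n * cnj (mob a (cis2 t)) ^ m) =
          cnj (integral {0..1} (\<lambda>t. mob a (cis2 t) ^ m * cnj (mob a (cis2 t)) ^ n))"
      by (simp add: integral_cnj mult.commute)
    also have "\<dots> = cnj (a ^ (m - n))" using False by (simp add: main)
    finally show ?thesis using False by (simp add: dst_def norm_power)
  qed
qed

lemma autom_bound:
  fixes c :: "nat \<Rightarrow> complex" and N :: nat
  assumes a: "cmod a < 1"
  defines "k \<equiv> (\<lambda>w. \<Sum>n<N. c n * (mob a w) ^ n)"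
  shows "k \<in> H2" "hn k \<le> (1 + cmod a) / (1 - cmod a) * (\<Sum>n<N. (cmod (c n))\<^sup>2)"
proof -
  define R where "R = 2 / (1 + cmod a)"
  have R1: "1 < R" unfolding R_def by (rule mob_R[OF a])
  have kh: "k holomorphic_on ball 0 R" unfolding k_def R_def
    by (intro holomorphic_intros mob_holo[OF a, unfolded o_def])
  have MS: "(\<lambda>n. (cmod (h2_coeff k n))\<^sup>2 * 1 ^ (2 * n)) sums Mr k 1"
    by (rule Mr_series[OF kh]) (use R1 in auto)
  hence sm: "summable (\<lambda>n. (cmod (h2_coeff k n))\<^sup>2)" and hnk: "hn k = Mr k 1"
    by (auto simp: sums_iff hn_def)
  have "k holomorphic_on ball 0 1" by (rule holomorphic_on_subset[OF kh]) (use R1 in auto)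
  thus "k \<in> H2" unfolding H2_def using sm by auto
  define T where "T n m = integral {0..1} (\<lambda>t. mob a (cis2 t) ^ n * cnj (mob a (cis2 t)) ^ m)" for n m
  define G where "G n m t = c n * cnj (c m) * (mob a (cis2 t) ^ n * cnj (mob a (cis2 t)) ^ m)" for n m t
  have pt: "complex_of_real ((cmod (k (of_real 1 * cis2 t)))\<^sup>2) = (\<Sum>n<N. \<Sum>m<N. G n m t)" for t
  proof -
    have "complex_of_real ((cmod (k (cis2 t)))\<^sup>2) = k (cis2 t) * cnj (k (cis2 t))"
      by (rule complex_norm_square)
    also have "\<dots> = (\<Sum>n<N. c n * (mob a (cis2 t)) ^ n) * (\<Sum>m<N. cnj (c m) * cnj (mob a (cis2 t)) ^ m)"
      by (simp add: k_def cnj_sum)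
    also have "\<dots> = (\<Sum>n<N. \<Sum>m<N. G n m t)"
      by (simp add: sum_product G_def algebra_simps)
    finally show ?thesis by simp
  qed
  have Gi: "(G n m has_integral (c n * cnj (c m) * T n m)) {0..1}" for n m
  proof -
    have "(\<lambda>t. mob a (cis2 t) ^ n * cnj (mob a (cis2 t)) ^ m) integrable_on {0..1}"
      by (intro integrable_continuous_real continuous_intros cont_mob_circ[OF a])
    from has_integral_mult_right[OF integrable_integral[OF this], of "c n * cnj (c m)"]
    show ?thesis unfolding G_def T_def .
  qed
  have "((\<lambda>t. complex_of_real ((cmod (k (of_real 1 * cis2 t)))\<^sup>2)) has_integral (\<Sum>n<N. \<Sum>m<N. c n * cnj (c m) * T n m)) {0..1}"
    unfolding pt by (intro has_integral_sum Gi) auto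
  moreover have "((\<lambda>t. complex_of_real ((cmod (k (of_real 1 * cis2 t)))\<^sup>2)) has_integral of_real (Mr k 1)) {0..1}"
  proof -
    have "(\<lambda>t. (cmod (k (of_real 1 * cis2 t)))\<^sup>2) integrable_on {0..1}"
      by (intro integrable_continuous_real continuous_intros continuous_on_circ[OF kh]) (use R1 in auto)
    from has_integral_of_real[OF integrable_integral[OF this]] show ?thesis unfolding Mr_def .
  qed
  ultimately have Q: "of_real (Mr k 1) = (\<Sum>n<N. \<Sum>m<N. c n * cnj (c m) * T n m)"
    by (rule has_integral_unique[symmetric])
  have "Mr k 1 \<le> cmod (\<Sum>n<N. \<Sum>m<N. c n * cnj (c m) * T n m)"
    unfolding Q[symmetric] by simp
  also have "\<dots> \<le> (1 + cmod a) / (1 - cmod a) * (\<Sum>n<N. (cmod (c n))\<^sup>2)"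
    by (rule schur_bound) (use a T_bound[OF a] in \<open>auto simp: T_def\<close>)
  finally show "hn k \<le> (1 + cmod a) / (1 - cmod a) * (\<Sum>n<N. (cmod (c n))\<^sup>2)" unfolding hnk .
qed

theorem comp_bounded:
  assumes ph: "\<phi> holomorphic_on ball 0 1" "\<And>w. cmod w < 1 \<Longrightarrow> cmod (\<phi> w) < 1" and h: "h \<in> H2"
  shows "(\<lambda>w. h (\<phi> w)) \<in> H2" "hn (\<lambda>w. h (\<phi> w)) \<le> (1 + cmod (\<phi> 0)) / (1 - cmod (\<phi> 0)) * hn h"
proof -
  define a where "a = \<phi> 0"
  have a: "cmod a < 1" unfolding a_def using ph(2)[of 0] by simp
  define M where "M = (1 + cmod a) / (1 - cmod a)"
  have M0: "0 \<le> M" unfolding M_def using a by simp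
  have hh: "h holomorphic_on ball 0 1" and hsm: "summable (\<lambda>n. (cmod (h2_coeff h n))\<^sup>2)"
    using h unfolding H2_def by auto
  define \<psi> where "\<psi> w = mob a (\<phi> w)" for w
  have psh: "\<psi> holomorphic_on ball 0 1" unfolding \<psi>_def
    by (rule holo_comp_ball[OF mob_holo1[OF a] ph])
  have psl: "cmod (\<psi> w) < 1" if "cmod w < 1" for w
    unfolding \<psi>_def by (rule mob_lt1[OF a ph(2)[OF that]])
  have ps0: "\<psi> 0 = 0" unfolding \<psi>_def a_def by simp
  have Mrb: "Mr (\<lambda>w. h (\<phi> w)) r \<le> M * hn h" if r: "0 < r" "r < 1" for r
  proof (rule Mr_comp_limit[OF hh ph r])
    fix N
    define k where "k = (\<lambda>w. \<Sum>n<N. h2_coeff h n * (mob a w) ^ n)"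
    have kH: "k \<in> H2" and kb: "hn k \<le> M * (\<Sum>n<N. (cmod (h2_coeff h n))\<^sup>2)"
      unfolding k_def M_def by (rule autom_bound[OF a])+
    have "Mr (\<lambda>w. trunc h N (\<phi> w)) r = Mr (\<lambda>w. k (\<psi> w)) r"
    proof (rule Mr_cong[OF _ r])
      fix w :: complex assume "cmod w < 1"
      thus "trunc h N (\<phi> w) = k (\<psi> w)"
        unfolding k_def \<psi>_def trunc_def using mob_invol[OF a ph(2)] by simp
    qed
    also have "\<dots> \<le> hn k" by (rule littlewood0[OF psh psl ps0 kH r])
    also have "\<dots> \<le> M * (\<Sum>n<N. (cmod (h2_coeff h n))\<^sup>2)" by (rule kb)
    also have "\<dots> \<le> M * hn h" unfolding hn_def
      by (intro mult_left_mono[OF _ M0] sum_le_suminf[OF hsm]) auto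
    finally show "Mr (\<lambda>w. trunc h N (\<phi> w)) r \<le> M * hn h" .
  qed
  have hph: "(\<lambda>w. h (\<phi> w)) holomorphic_on ball 0 1" by (rule holo_comp_ball[OF hh ph])
  show "(\<lambda>w. h (\<phi> w)) \<in> H2" by (rule H2_of_Mr_bound(1)[OF hph Mrb])
  show "hn (\<lambda>w. h (\<phi> w)) \<le> (1 + cmod (\<phi> 0)) / (1 - cmod (\<phi> 0)) * hn h"
    using H2_of_Mr_bound(2)[OF hph Mrb] unfolding M_def a_def .
qed



lemma h2_coeff_via_int:
  assumes "u holomorphic_on ball 0 1"
  shows "h2_coeff u n = integral {0..1} (\<lambda>t. u (of_real (1/2) * cis2 t) * cnj (cis2 t) ^ n) / of_real (1/2) ^ n"
  using integral_unique[OF coef_integral[OF assms, of "1/2" n]] by simp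

lemma circ_integrable:
  assumes "u holomorphic_on ball 0 1"
  shows "(\<lambda>t. u (of_real (1/2) * cis2 t) * cnj (cis2 t) ^ n) integrable_on {0..1}"
  by (intro integrable_continuous_real continuous_intros continuous_on_circ[OF assms]) auto

lemma h2_coeff_sum:
  assumes "finite J" "\<And>j. j \<in> J \<Longrightarrow> F j holomorphic_on ball 0 1"
  shows "h2_coeff (\<lambda>w. \<Sum>j\<in>J. c j * F j w) n = (\<Sum>j\<in>J. c j * h2_coeff (F j) n)"
proof -
  have hs: "(\<lambda>w. \<Sum>j\<in>J. c j * F j w) holomorphic_on ball 0 1"
    by (intro holomorphic_intros assms(2)) 
  have "integral {0..1} (\<lambda>t. (\<Sum>j\<in>J. c j * F j (of_real (1/2) * cis2 t)) * cnj (cis2 t) ^ n)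
      = integral {0..1} (\<lambda>t. \<Sum>j\<in>J. c j * (F j (of_real (1/2) * cis2 t) * cnj (cis2 t) ^ n))"
    by (simp add: sum_distrib_right mult.assoc)
  also have "\<dots> = (\<Sum>j\<in>J. integral {0..1} (\<lambda>t. c j * (F j (of_real (1/2) * cis2 t) * cnj (cis2 t) ^ n)))"
    by (rule integral_sum[OF assms(1)]) (rule integrable_on_mult_right, rule circ_integrable, rule assms(2))
  also have "\<dots> = (\<Sum>j\<in>J. c j * integral {0..1} (\<lambda>t. F j (of_real (1/2) * cis2 t) * cnj (cis2 t) ^ n))"
    by (simp add: integral_mult_right)
  finally have L: "integral {0..1} (\<lambda>t. (\<Sum>j\<in>J. c j * F j (of_real (1/2) * cis2 t)) * cnj (cis2 t) ^ n) =
     (\<Sum>j\<in>J. c j * integral {0..1} (\<lambda>t. F j (of_real (1/2) * cis2 t) * cnj (cis2 t) ^ n))" .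
  have R: "(\<Sum>j\<in>J. c j * h2_coeff (F j) n) =
     (\<Sum>j\<in>J. c j * (integral {0..1} (\<lambda>t. F j (of_real (1/2) * cis2 t) * cnj (cis2 t) ^ n) / of_real (1/2) ^ n))"
    by (intro sum.cong refl) (subst h2_coeff_via_int[OF assms(2)], auto)
  show ?thesis unfolding h2_coeff_via_int[OF hs] R L by (simp add: sum_divide_distrib)
qed

lemma h2_coeff_diff:
  assumes "f holomorphic_on ball 0 1" "g holomorphic_on ball 0 1"
  shows "h2_coeff (\<lambda>w. f w - g w) n = h2_coeff f n - h2_coeff g n"
proof -
  have hs: "(\<lambda>w. f w - g w) holomorphic_on ball 0 1" by (intro holomorphic_intros assms)
  have "integral {0..1} (\<lambda>t. (f (of_real (1/2) * cis2 t) - g (of_real (1/2) * cis2 t)) * cnj (cis2 t) ^ n)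
      = integral {0..1} (\<lambda>t. f (of_real (1/2) * cis2 t) * cnj (cis2 t) ^ n - g (of_real (1/2) * cis2 t) * cnj (cis2 t) ^ n)"
    by (simp only: left_diff_distrib)
  also have "\<dots> = integral {0..1} (\<lambda>t. f (of_real (1/2) * cis2 t) * cnj (cis2 t) ^ n) - integral {0..1} (\<lambda>t. g (of_real (1/2) * cis2 t) * cnj (cis2 t) ^ n)"
    by (rule integral_diff[OF circ_integrable[OF assms(1)] circ_integrable[OF assms(2)]])
  finally have L: "integral {0..1} (\<lambda>t. (f (of_real (1/2) * cis2 t) - g (of_real (1/2) * cis2 t)) * cnj (cis2 t) ^ n)
      = integral {0..1} (\<lambda>t. f (of_real (1/2) * cis2 t) * cnj (cis2 t) ^ n) - integral {0..1} (\<lambda>t. g (of_real (1/2) * cis2 t) * cnj (cis2 t) ^ n)" .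
  show ?thesis unfolding h2_coeff_via_int[OF hs] h2_coeff_via_int[OF assms(1)] h2_coeff_via_int[OF assms(2)] L
    by (rule diff_divide_distrib)
qed

lemma h2_coeff_ps:
  assumes ps: "\<And>w. cmod w < 1 \<Longrightarrow> (\<lambda>n. a n * w ^ n) sums u w" and u: "u holomorphic_on ball 0 1"
  shows "h2_coeff u n = a n"
proof -
  define s :: real where "s = 1/2"
  have sm: "summable (\<lambda>m. cmod (a m * (of_real s) ^ m))"
    using ps[of "of_real (3/4)"] by (intro powser_insidea[of _ "of_real (3/4)"]) (auto simp: sums_iff s_def)
  have "(\<lambda>m. integral {0..1} (\<lambda>t. a m * (of_real s * cis2 t) ^ m * cnj (cis2 t) ^ n)) sums
        integral {0..1} (\<lambda>t. u (of_real s * cis2 t) * cnj (cis2 t) ^ n)"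
  proof (rule integral_series)
    fix m show "continuous_on {0..1} (\<lambda>t. a m * (of_real s * cis2 t) ^ m * cnj (cis2 t) ^ n)"
      by (intro continuous_intros)
  next
    fix m and t :: real
    show "cmod (a m * (of_real s * cis2 t) ^ m * cnj (cis2 t) ^ n) \<le> cmod (a m * (of_real s) ^ m)"
      by (simp add: norm_mult norm_power)
  next
    show "summable (\<lambda>m. cmod (a m * (of_real s) ^ m))" by (rule sm)
  next
    fix t :: real
    have "(\<lambda>m. a m * (of_real s * cis2 t) ^ m) sums u (of_real s * cis2 t)"
      by (rule ps) (simp add: norm_mult s_def)
    thus "(\<lambda>m. a m * (of_real s * cis2 t) ^ m * cnj (cis2 t) ^ n) sums (u (of_real s * cis2 t) * cnj (cis2 t) ^ n)"
      by (rule sums_mult2)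
  qed
  moreover have "integral {0..1} (\<lambda>t. a m * (of_real s * cis2 t) ^ m * cnj (cis2 t) ^ n) =
      (if m = n then a n * of_real s ^ n else 0)" for m
  proof -
    have "integral {0..1} (\<lambda>t. a m * (of_real s * cis2 t) ^ m * cnj (cis2 t) ^ n) =
          (a m * of_real s ^ m) * integral {0..1} (\<lambda>t. cis2 t ^ m * cnj (cis2 t) ^ n)"
    proof -
      have "(\<lambda>t. a m * (of_real s * cis2 t) ^ m * cnj (cis2 t) ^ n) = (\<lambda>t. (a m * of_real s ^ m) * (cis2 t ^ m * cnj (cis2 t) ^ n))"
        by (rule ext) (simp only: power_mult_distrib mult.assoc)
      thus ?thesis by (simp only: integral_mult_right)
    qed
    also have "\<dots> = (a m * of_real s ^ m) * (if m = n then 1 else 0)"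
      using integral_unique[OF cis2_orth[of m n]] by simp
    finally show ?thesis by simp
  qed
  ultimately have "(\<lambda>m. if m = n then a n * of_real s ^ n else 0) sums
        integral {0..1} (\<lambda>t. u (of_real s * cis2 t) * cnj (cis2 t) ^ n)" by simp
  moreover have "(\<lambda>m. if m = n then a n * of_real s ^ n else 0) sums (a n * of_real s ^ n)"
    by (rule sums_single)
  ultimately have "integral {0..1} (\<lambda>t. u (of_real s * cis2 t) * cnj (cis2 t) ^ n) = a n * of_real s ^ n"
    using sums_unique2 by blast
  moreover have "integral {0..1} (\<lambda>t. u (of_real s * cis2 t) * cnj (cis2 t) ^ n) = of_real s ^ n * h2_coeff u n"
    using integral_unique[OF coef_integral[OF u, of s n]] by (simp add: s_def)
  ultimately show ?thesis by (simp add: s_def)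
qed

lemma h2_coeff_mono: "h2_coeff (\<lambda>w. w ^ m) n = (if n = m then 1 else 0)"
proof (rule h2_coeff_ps)
  fix w :: complex
  show "(\<lambda>n. (if n = m then 1 else 0) * w ^ n) sums w ^ m"
  proof -
    have "(\<lambda>n. (if n = m then 1 else 0) * w ^ n) = (\<lambda>n. if n = m then w ^ n else 0)" by (rule ext) simp
    thus ?thesis using sums_single[of m "\<lambda>n. w ^ n"] by simp
  qed
qed (intro holomorphic_intros)

lemma mono_H2: "(\<lambda>w. w ^ m) \<in> H2"
proof -
  have "(\<lambda>n. (cmod (h2_coeff (\<lambda>w. w ^ m) n))\<^sup>2) = (\<lambda>n. if n = m then 1 else 0)"
    by (rule ext) (simp add: h2_coeff_mono)
  moreover have "(\<lambda>w. w ^ m) holomorphic_on ball 0 1" by (intro holomorphic_intros)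
  ultimately show ?thesis unfolding H2_def using summable_single[of m "\<lambda>n. 1::real"] by simp
qed

definition kern :: "complex \<Rightarrow> complex \<Rightarrow> complex" where
  "kern z w = 1 / (1 - cnj z * w)"

lemma kern_holo: "cmod z < 1 \<Longrightarrow> kern z holomorphic_on ball 0 1"
  unfolding kern_def[abs_def]
proof (intro holomorphic_intros)
  fix w :: complex assume "cmod z < 1" "w \<in> ball 0 1"
  thus "1 - cnj z * w \<noteq> 0" by (intro mob_den) (simp add: mult_lt1)
qed

lemma h2_coeff_kern:
  assumes "cmod z < 1" shows "h2_coeff (kern z) n = cnj z ^ n"
proof (rule h2_coeff_ps[OF _ kern_holo[OF assms]])
  fix w :: complex assume "cmod w < 1"
  hence "cmod (cnj z * w) < 1" using assms by (simp add: norm_mult mult_lt1)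
  from geometric_sums[OF this] show "(\<lambda>n. cnj z ^ n * w ^ n) sums kern z w"
    by (simp add: kern_def power_mult_distrib)
qed

lemma kern_H2: assumes "cmod z < 1" shows "kern z \<in> H2"
proof -
  have "summable (\<lambda>n. (cmod z)\<^sup>2 ^ n)" using assms
    by (intro summable_geometric) (simp add: abs_square_less_1)
  moreover have "(cmod (h2_coeff (kern z) n))\<^sup>2 = (cmod z)\<^sup>2 ^ n" for n
    unfolding h2_coeff_kern[OF assms] by (simp add: norm_power) (metis power_mult mult.commute)
  ultimately show ?thesis unfolding H2_def using kern_holo[OF assms] by simp
qed



lemma cs_series:
  fixes a b :: "nat \<Rightarrow> complex"
  assumes A: "summable (\<lambda>n. (cmod (a n))\<^sup>2)" and B: "summable (\<lambda>n. (cmod (b n))\<^sup>2)"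
  shows "summable (\<lambda>n. a n * cnj (b n))"
    "cmod (\<Sum>n. a n * cnj (b n)) \<le> sqrt (\<Sum>n. (cmod (a n))\<^sup>2) * sqrt (\<Sum>n. (cmod (b n))\<^sup>2)"
proof -
  have nb: "norm (a n * cnj (b n)) \<le> ((cmod (a n))\<^sup>2 + (cmod (b n))\<^sup>2) / 2" for n
    using sum_squares_bound[of "cmod (a n)" "cmod (b n)"] by (simp add: norm_mult)
  have sn: "summable (\<lambda>n. norm (a n * cnj (b n)))"
    by (rule summable_comparison_test[OF _ summable_divide[OF summable_add[OF A B], of 2]]) (use nb in auto)
  thus "summable (\<lambda>n. a n * cnj (b n))" by (rule summable_norm_cancel)
  have "cmod (\<Sum>n. a n * cnj (b n)) \<le> (\<Sum>n. norm (a n * cnj (b n)))" by (rule summable_norm[OF sn])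
  also have "\<dots> \<le> sqrt (\<Sum>n. (cmod (a n))\<^sup>2) * sqrt (\<Sum>n. (cmod (b n))\<^sup>2)"
  proof (rule suminf_le_const[OF sn])
    fix N
    have "(\<Sum>n<N. norm (a n * cnj (b n))) = (\<Sum>n<N. cmod (a n) * cmod (b n))" by (simp add: norm_mult)
    also have "\<dots> \<le> sqrt ((\<Sum>n<N. (cmod (a n))\<^sup>2) * (\<Sum>n<N. (cmod (b n))\<^sup>2))"
      using Cauchy_Schwarz_ineq_sum[of "\<lambda>n. cmod (a n)" "\<lambda>n. cmod (b n)" "{..<N}"]
      by (intro real_le_rsqrt) auto
    also have "\<dots> \<le> sqrt ((\<Sum>n. (cmod (a n))\<^sup>2) * (\<Sum>n. (cmod (b n))\<^sup>2))"
      by (intro real_sqrt_le_mono mult_mono sum_le_suminf A B) (auto intro: sum_nonneg suminf_nonneg A B)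
    finally show "(\<Sum>n<N. norm (a n * cnj (b n))) \<le> sqrt (\<Sum>n. (cmod (a n))\<^sup>2) * sqrt (\<Sum>n. (cmod (b n))\<^sup>2)"
      by (simp add: real_sqrt_mult)
  qed
  finally show "cmod (\<Sum>n. a n * cnj (b n)) \<le> sqrt (\<Sum>n. (cmod (a n))\<^sup>2) * sqrt (\<Sum>n. (cmod (b n))\<^sup>2)" .
qed

lemma H2_D: "u \<in> H2 \<Longrightarrow> u holomorphic_on ball 0 1"
  "u \<in> H2 \<Longrightarrow> summable (\<lambda>n. (cmod (h2_coeff u n))\<^sup>2)"
  unfolding H2_def by auto

lemma inner_summable: "u \<in> H2 \<Longrightarrow> v \<in> H2 \<Longrightarrow> summable (\<lambda>n. h2_coeff u n * cnj (h2_coeff v n))"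
  using cs_series(1)[OF H2_D(2) H2_D(2)] .

lemma inner_cs: "u \<in> H2 \<Longrightarrow> v \<in> H2 \<Longrightarrow> cmod (h2_inner u v) \<le> sqrt (hn u) * sqrt (hn v)"
  unfolding h2_inner_def hn_def using cs_series(2)[OF H2_D(2) H2_D(2)] .

lemma hn_nonneg: "hn u \<ge> 0 \<or> \<not> summable (\<lambda>n. (cmod (h2_coeff u n))\<^sup>2)"
  unfolding hn_def by (auto intro: suminf_nonneg)

lemma inner_diff:
  assumes "u \<in> H2" "v \<in> H2" "f \<in> H2"
  shows "h2_inner (\<lambda>w. u w - v w) f = h2_inner u f - h2_inner v f"
  unfolding h2_inner_def h2_coeff_diff[OF H2_D(1)[OF assms(1)] H2_D(1)[OF assms(2)]]
  using suminf_diff[OF inner_summable[OF assms(1,3)] inner_summable[OF assms(2,3)]]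
  by (simp add: left_diff_distrib)

lemma inner_mono_left: "h2_inner (\<lambda>w. w ^ m) g = cnj (h2_coeff g m)"
proof -
  have "(\<lambda>n. h2_coeff (\<lambda>w. w ^ m) n * cnj (h2_coeff g n)) = (\<lambda>n. if n = m then cnj (h2_coeff g n) else 0)"
    by (rule ext) (simp add: h2_coeff_mono)
  thus ?thesis unfolding h2_inner_def using sums_single[of m "\<lambda>n. cnj (h2_coeff g n)"]
    by (simp add: sums_iff)
qed

lemma inner_mono_right: "h2_inner g (\<lambda>w. w ^ m) = h2_coeff g m"
proof -
  have "(\<lambda>n. h2_coeff g n * cnj (h2_coeff (\<lambda>w. w ^ m) n)) = (\<lambda>n. if n = m then h2_coeff g n else 0)"
    by (rule ext) (simp add: h2_coeff_mono)
  thus ?thesis unfolding h2_inner_def using sums_single[of m "\<lambda>n. h2_coeff g n"]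
    by (simp add: sums_iff)
qed

lemma trunc_coeff:
  "h2_coeff (trunc h N) m = (if m < N then h2_coeff h m else 0)"
proof -
  have "h2_coeff (\<lambda>w. \<Sum>n\<in>{..<N}. h2_coeff h n * w ^ n) m = (\<Sum>n\<in>{..<N}. h2_coeff h n * h2_coeff (\<lambda>w. w ^ n) m)"
    by (rule h2_coeff_sum) (auto intro: holomorphic_intros)
  also have "\<dots> = (\<Sum>n\<in>{..<N}. if n = m then h2_coeff h m else 0)"
    by (intro sum.cong refl) (simp add: h2_coeff_mono)
  also have "\<dots> = (if m < N then h2_coeff h m else 0)" by (simp add: sum.delta')
  finally show ?thesis unfolding trunc_def[abs_def] .
qed

lemma trunc_holo: "trunc h N holomorphic_on A"
  unfolding trunc_def[abs_def] by (intro holomorphic_intros)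

lemma trunc_H2: "trunc h N \<in> H2"
proof -
  have "summable (\<lambda>m. (cmod (h2_coeff (trunc h N) m))\<^sup>2)"
    unfolding trunc_coeff by (rule summable_finite[of "{..<N}"]) auto
  thus ?thesis unfolding H2_def using trunc_holo by auto
qed

lemma tail_coeff:
  assumes "h \<in> H2"
  shows "h2_coeff (\<lambda>w. h w - trunc h N w) m = (if m < N then 0 else h2_coeff h m)"
  unfolding h2_coeff_diff[OF H2_D(1)[OF assms] trunc_holo] trunc_coeff by simp

lemma tail_H2:
  assumes "h \<in> H2" shows "(\<lambda>w. h w - trunc h N w) \<in> H2"
    "hn (\<lambda>w. h w - trunc h N w) = hn h - (\<Sum>m<N. (cmod (h2_coeff h m))\<^sup>2)"
proof -
  have sm: "summable (\<lambda>m. (cmod (h2_coeff h m))\<^sup>2)" by (rule H2_D(2)[OF assms])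
  have e: "(\<lambda>m. (cmod (h2_coeff (\<lambda>w. h w - trunc h N w) m))\<^sup>2) =
        (\<lambda>m. (cmod (h2_coeff h m))\<^sup>2 - (if m < N then (cmod (h2_coeff h m))\<^sup>2 else 0))"
    by (rule ext) (simp add: tail_coeff[OF assms])
  have s2: "summable (\<lambda>m. if m < N then (cmod (h2_coeff h m))\<^sup>2 else 0)"
    by (rule summable_finite[of "{..<N}"]) auto
  have "(\<lambda>w. h w - trunc h N w) holomorphic_on ball 0 1"
    by (intro holomorphic_intros H2_D(1)[OF assms] trunc_holo)
  thus "(\<lambda>w. h w - trunc h N w) \<in> H2" unfolding H2_def using summable_diff[OF sm s2] e by simp
  have "(\<Sum>m. if m < N then (cmod (h2_coeff h m))\<^sup>2 else 0) = (\<Sum>m<N. (cmod (h2_coeff h m))\<^sup>2)"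
    by (subst suminf_finite[of "{..<N}"]) auto
  thus "hn (\<lambda>w. h w - trunc h N w) = hn h - (\<Sum>m<N. (cmod (h2_coeff h m))\<^sup>2)"
    unfolding hn_def e using suminf_diff[OF sm s2] by simp
qed

lemma tail_to_0:
  assumes "h \<in> H2" shows "(\<lambda>N. hn (\<lambda>w. h w - trunc h N w)) \<longlonglongrightarrow> 0"
proof -
  have "(\<lambda>N. hn h - (\<Sum>m<N. (cmod (h2_coeff h m))\<^sup>2)) \<longlonglongrightarrow> hn h - hn h"
    unfolding hn_def by (intro tendsto_intros summable_LIMSEQ H2_D(2)[OF assms])
  thus ?thesis unfolding tail_H2(2)[OF assms] by simp
qed



lemma polyf_coeff: "h2_coeff (\<lambda>w. \<Sum>n<N. c n * w ^ n) m = (if m < N then c m else 0)"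
proof -
  have "h2_coeff (\<lambda>w. \<Sum>n\<in>{..<N}. c n * w ^ n) m = (\<Sum>n\<in>{..<N}. c n * h2_coeff (\<lambda>w. w ^ n) m)"
    by (rule h2_coeff_sum) (auto intro: holomorphic_intros)
  also have "\<dots> = (\<Sum>n\<in>{..<N}. if n = m then c m else 0)"
    by (intro sum.cong refl) (simp add: h2_coeff_mono)
  also have "\<dots> = (if m < N then c m else 0)" by (simp add: sum.delta')
  finally show ?thesis .
qed

lemma polyf_H2: "(\<lambda>w. \<Sum>n<N. c n * w ^ n) \<in> H2" "hn (\<lambda>w. \<Sum>n<N. c n * w ^ n) = (\<Sum>n<N. (cmod (c n))\<^sup>2)"
proof -
  have e: "(\<lambda>m. (cmod (h2_coeff (\<lambda>w. \<Sum>n<N. c n * w ^ n) m))\<^sup>2) = (\<lambda>m. if m < N then (cmod (c m))\<^sup>2 else 0)"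
    by (rule ext) (simp add: polyf_coeff)
  have "summable (\<lambda>m. if m < N then (cmod (c m))\<^sup>2 else 0)"
    by (rule summable_finite[of "{..<N}"]) auto
  hence "summable (\<lambda>m. (cmod (h2_coeff (\<lambda>w. \<Sum>n<N. c n * w ^ n) m))\<^sup>2)" unfolding e .
  moreover have "(\<lambda>w. \<Sum>n<N. c n * w ^ n) holomorphic_on ball 0 1" by (intro holomorphic_intros)
  ultimately show "(\<lambda>w. \<Sum>n<N. c n * w ^ n) \<in> H2" unfolding H2_def by simp
  show "hn (\<lambda>w. \<Sum>n<N. c n * w ^ n) = (\<Sum>n<N. (cmod (c n))\<^sup>2)"
    unfolding hn_def e by (subst suminf_finite[of "{..<N}"]) auto
qed

lemma hn_nn: "u \<in> H2 \<Longrightarrow> 0 \<le> hn u"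
  unfolding hn_def using H2_D(2) by (auto intro: suminf_nonneg)

locale selfmap =
  fixes \<phi> :: "complex \<Rightarrow> complex"
  assumes holo: "\<phi> holomorphic_on ball 0 1" and lt1: "\<And>w. cmod w < 1 \<Longrightarrow> cmod (\<phi> w) < 1"
begin

definition Mc where "Mc = (1 + cmod (\<phi> 0)) / (1 - cmod (\<phi> 0))"

lemma Mc_nonneg: "0 \<le> Mc"
  using lt1[of 0] unfolding Mc_def by simp

lemma C_H2: "h \<in> H2 \<Longrightarrow> (\<lambda>w. h (\<phi> w)) \<in> H2"
  using comp_bounded(1)[OF holo lt1] .

lemma C_hn: "h \<in> H2 \<Longrightarrow> hn (\<lambda>w. h (\<phi> w)) \<le> Mc * hn h"
  unfolding Mc_def using comp_bounded(2)[OF holo lt1] .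

lemma pow_H2: "(\<lambda>w. (\<phi> w) ^ n) \<in> H2"
  using C_H2[OF mono_H2[of n]] .

lemma pow_holo: "(\<lambda>w. (\<phi> w) ^ n) holomorphic_on ball 0 1"
  by (intro holomorphic_intros holo)

lemma C_bound:
  assumes "h \<in> H2" "f \<in> H2"
  shows "cmod (h2_inner (\<lambda>w. h (\<phi> w)) f) \<le> sqrt (Mc * hn h) * sqrt (hn f)"
proof -
  have "cmod (h2_inner (\<lambda>w. h (\<phi> w)) f) \<le> sqrt (hn (\<lambda>w. h (\<phi> w))) * sqrt (hn f)"
    by (rule inner_cs[OF C_H2[OF assms(1)] assms(2)])
  also have "\<dots> \<le> sqrt (Mc * hn h) * sqrt (hn f)"
    by (intro mult_right_mono real_sqrt_le_mono C_hn assms) (auto intro: hn_nn assms)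
  finally show ?thesis .
qed

lemma C_lin:
  assumes f: "f \<in> H2"
  shows "h2_inner (\<lambda>w. \<Sum>n<N. c n * (\<phi> w) ^ n) f = (\<Sum>n<N. c n * h2_inner (\<lambda>w. (\<phi> w) ^ n) f)"
proof -
  have co: "h2_coeff (\<lambda>w. \<Sum>n\<in>{..<N}. c n * (\<phi> w) ^ n) m = (\<Sum>n\<in>{..<N}. c n * h2_coeff (\<lambda>w. (\<phi> w) ^ n) m)" for m
    by (rule h2_coeff_sum[where F = "\<lambda>n w. (\<phi> w) ^ n"]) (auto intro: pow_holo)
  have "h2_inner (\<lambda>w. \<Sum>n<N. c n * (\<phi> w) ^ n) f =
        (\<Sum>m. \<Sum>n<N. c n * (h2_coeff (\<lambda>w. (\<phi> w) ^ n) m * cnj (h2_coeff f m)))"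
    unfolding h2_inner_def co by (simp add: sum_distrib_right mult.assoc)
  also have "\<dots> = (\<Sum>n<N. \<Sum>m. c n * (h2_coeff (\<lambda>w. (\<phi> w) ^ n) m * cnj (h2_coeff f m)))"
    by (rule suminf_sum) (intro summable_mult inner_summable pow_H2 f)
  also have "\<dots> = (\<Sum>n<N. c n * h2_inner (\<lambda>w. (\<phi> w) ^ n) f)"
    unfolding h2_inner_def by (intro sum.cong refl suminf_mult inner_summable pow_H2 f)
  finally show ?thesis .
qed

definition gh :: "(complex \<Rightarrow> complex) \<Rightarrow> nat \<Rightarrow> complex" where
  "gh f n = cnj (h2_inner (\<lambda>w. (\<phi> w) ^ n) f)"

lemma gh_summable:
  assumes f: "f \<in> H2"
  shows "summable (\<lambda>n. (cmod (gh f n))\<^sup>2)"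
proof (rule summableI_nonneg_bounded)
  fix N
  define S where "S = (\<Sum>n<N. (cmod (gh f n))\<^sup>2)"
  have S0: "0 \<le> S" unfolding S_def by (auto intro: sum_nonneg)
  have "h2_inner (\<lambda>w. \<Sum>n<N. gh f n * (\<phi> w) ^ n) f = (\<Sum>n<N. gh f n * cnj (gh f n))"
    unfolding C_lin[OF f] by (simp add: gh_def)
  also have "\<dots> = of_real S" unfolding S_def of_real_sum complex_norm_square ..
  finally have E: "h2_inner (\<lambda>w. (\<lambda>u. \<Sum>n<N. gh f n * u ^ n) (\<phi> w)) f = of_real S" by simp
  have "S = cmod (h2_inner (\<lambda>w. (\<lambda>u. \<Sum>n<N. gh f n * u ^ n) (\<phi> w)) f)" unfolding E using S0 by simp
  also have "\<dots> \<le> sqrt (Mc * hn (\<lambda>u. \<Sum>n<N. gh f n * u ^ n)) * sqrt (hn f)"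
    by (rule C_bound[OF polyf_H2(1) f])
  also have "\<dots> = sqrt (Mc * S) * sqrt (hn f)" unfolding polyf_H2(2) S_def ..
  finally have le: "S \<le> sqrt (Mc * S) * sqrt (hn f)" .
  have hf0: "0 \<le> hn f" unfolding hn_def using H2_D(2)[OF f] by (auto intro: suminf_nonneg)
  have "S * S \<le> (sqrt (Mc * S) * sqrt (hn f))\<^sup>2" using le S0 by (simp add: power2_eq_square mult_mono)
  also have "\<dots> = Mc * S * hn f" using Mc_nonneg S0 hf0 by (simp add: power_mult_distrib)
  finally have "S * S \<le> (Mc * hn f) * S" by (simp add: algebra_simps)
  hence "S \<le> Mc * hn f" using S0 by (cases "S = 0") (auto simp: Mc_nonneg hf0)
  thus "(\<Sum>n<N. (cmod (gh f n))\<^sup>2) \<le> Mc * hn f" unfolding S_def .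
qed simp

definition gfun :: "(complex \<Rightarrow> complex) \<Rightarrow> complex \<Rightarrow> complex" where
  "gfun f w = (if cmod w < 1 then (\<Sum>n. gh f n * w ^ n) else 0)"

lemma sq_ps_summable:
  assumes "summable (\<lambda>n. (cmod (a n))\<^sup>2)" "cmod w < 1"
  shows "summable (\<lambda>n. a n * w ^ n)"
proof -
  have g: "summable (\<lambda>n. ((cmod w)\<^sup>2) ^ n)" using assms(2)
    by (intro summable_geometric) (simp add: abs_square_less_1)
  have "summable (\<lambda>n. norm (a n * w ^ n))"
  proof (rule summable_comparison_test[OF _ summable_divide[OF summable_add[OF assms(1) g], of 2]])
    show "\<exists>N. \<forall>n\<ge>N. norm (norm (a n * w ^ n)) \<le> ((cmod (a n))\<^sup>2 + ((cmod w)\<^sup>2) ^ n) / 2"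
    proof (intro exI allI impI)
      fix n :: nat
      have "2 * cmod (a n) * cmod w ^ n \<le> (cmod (a n))\<^sup>2 + (cmod w ^ n)\<^sup>2" by (rule sum_squares_bound)
      thus "norm (norm (a n * w ^ n)) \<le> ((cmod (a n))\<^sup>2 + ((cmod w)\<^sup>2) ^ n) / 2"
      proof -
        have "(cmod w ^ n)\<^sup>2 = ((cmod w)\<^sup>2) ^ n" by (metis power_mult mult.commute)
        thus ?thesis using \<open>2 * cmod (a n) * cmod w ^ n \<le> (cmod (a n))\<^sup>2 + (cmod w ^ n)\<^sup>2\<close>
          by (simp add: norm_mult norm_power)
      qed
    qed
  qed
  thus ?thesis by (rule summable_norm_cancel)
qed

lemma gfun_sums:
  assumes f: "f \<in> H2" and w: "cmod w < 1"
  shows "(\<lambda>n. gh f n * w ^ n) sums gfun f w"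
  using sq_ps_summable[OF gh_summable[OF f] w] w unfolding gfun_def by (simp add: summable_sums)

lemma gfun_holo:
  assumes f: "f \<in> H2" shows "gfun f holomorphic_on ball 0 1"
proof -
  have "(\<lambda>w. \<Sum>n. gh f n * w ^ n) holomorphic_on ball 0 1"
    unfolding holomorphic_on_open[OF open_ball]
  proof
    fix x :: complex assume "x \<in> ball 0 1"
    hence "norm x < 1" by simp
    from termdiffs_strong'[of 1 "gh f", OF sq_ps_summable[OF gh_summable[OF f]] this]
    show "\<exists>f'. ((\<lambda>w. \<Sum>n. gh f n * w ^ n) has_field_derivative f') (at x)" by blast
  qed
  thus ?thesis by (rule holomorphic_transform) (simp add: gfun_def)
qed

lemma gfun_coeff: "f \<in> H2 \<Longrightarrow> h2_coeff (gfun f) n = gh f n"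
  by (rule h2_coeff_ps[OF gfun_sums gfun_holo])

lemma gfun_H2: assumes "f \<in> H2" shows "gfun f \<in> H2"
  using gfun_holo[OF assms] gh_summable[OF assms] gfun_coeff[OF assms] by (simp add: H2_def)

lemma gfun_out: "1 \<le> cmod w \<Longrightarrow> gfun f w = 0"
  unfolding gfun_def by simp

lemma gfun_adj:
  assumes f: "f \<in> H2" and h: "h \<in> H2"
  shows "h2_inner (\<lambda>w. h (\<phi> w)) f = h2_inner h (gfun f)"
proof -
  define A where "A N = h2_inner (\<lambda>w. trunc h N (\<phi> w)) f" for N
  have A: "A N = (\<Sum>n<N. h2_coeff h n * cnj (gh f n))" for N
    unfolding A_def trunc_def C_lin[OF f] gh_def by simp
  have L1: "A \<longlonglongrightarrow> h2_inner h (gfun f)"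
    unfolding A h2_inner_def gfun_coeff[OF f, symmetric]
    by (intro summable_LIMSEQ inner_summable h gfun_H2 f)
  have "(\<lambda>N. h2_inner (\<lambda>w. h (\<phi> w)) f - A N) \<longlonglongrightarrow> 0"
  proof (rule Lim_null_comparison)
    show "\<forall>\<^sub>F N in sequentially. norm (h2_inner (\<lambda>w. h (\<phi> w)) f - A N) \<le> sqrt (Mc * hn (\<lambda>w. h w - trunc h N w)) * sqrt (hn f)"
    proof (intro always_eventually allI)
      fix N
      have "h2_inner (\<lambda>w. h (\<phi> w)) f - A N = h2_inner (\<lambda>w. (\<lambda>u. h u - trunc h N u) (\<phi> w)) f"
        unfolding A_def by (simp add: inner_diff[OF C_H2[OF h] C_H2[OF trunc_H2] f])
      also have "cmod \<dots> \<le> sqrt (Mc * hn (\<lambda>w. h w - trunc h N w)) * sqrt (hn f)"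
        by (rule C_bound[OF tail_H2(1)[OF h] f])
      finally show "norm (h2_inner (\<lambda>w. h (\<phi> w)) f - A N) \<le> sqrt (Mc * hn (\<lambda>w. h w - trunc h N w)) * sqrt (hn f)" by simp
    qed
    show "(\<lambda>N. sqrt (Mc * hn (\<lambda>w. h w - trunc h N w)) * sqrt (hn f)) \<longlonglongrightarrow> 0"
      using tendsto_mult[OF tendsto_real_sqrt[OF tendsto_mult[OF tendsto_const tail_to_0[OF h]]] tendsto_const, of Mc "sqrt (hn f)"]
      by simp
  qed
  hence "(\<lambda>N. h2_inner (\<lambda>w. h (\<phi> w)) f - (h2_inner (\<lambda>w. h (\<phi> w)) f - A N)) \<longlonglongrightarrow> h2_inner (\<lambda>w. h (\<phi> w)) f - 0"
    by (intro tendsto_intros)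
  hence "A \<longlonglongrightarrow> h2_inner (\<lambda>w. h (\<phi> w)) f" by simp
  from LIMSEQ_unique[OF this L1] show ?thesis .
qed

lemma adj_unique:
  assumes f: "f \<in> H2" and G: "G \<in> H2" "\<forall>w. 1 \<le> cmod w \<longrightarrow> G w = 0"
    and adj: "\<forall>h\<in>H2. h2_inner (\<lambda>w. h (\<phi> w)) f = h2_inner h G"
  shows "G = gfun f"
proof
  fix w
  have co: "h2_coeff G n = gh f n" for n
  proof -
    have "h2_inner (\<lambda>w. (\<phi> w) ^ n) f = h2_inner (\<lambda>w. w ^ n) G" using adj mono_H2[of n] by auto
    thus ?thesis unfolding gh_def inner_mono_left by simp
  qed
  show "G w = gfun f w"
  proof (cases "cmod w < 1")
    case True
    have "(\<lambda>n. h2_coeff G n * w ^ n) sums G w" by (rule h2_ps[OF H2_D(1)[OF G(1)] True])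
    hence "(\<lambda>n. gh f n * w ^ n) sums G w" unfolding co .
    with gfun_sums[OF f True] show ?thesis using sums_unique2 by blast
  next
    case False thus ?thesis using G(2) gfun_out by simp
  qed
qed

lemma gfun_eval:
  assumes f: "f \<in> H2" and z: "cmod z < 1"
  shows "gfun f z = cnj (h2_inner (\<lambda>w. kern z (\<phi> w)) f)"
proof -
  have "h2_inner (\<lambda>w. kern z (\<phi> w)) f = h2_inner (kern z) (gfun f)"
    by (rule gfun_adj[OF f kern_H2[OF z]])
  also have "\<dots> = (\<Sum>n. cnj (gh f n * z ^ n))"
    unfolding h2_inner_def h2_coeff_kern[OF z] gfun_coeff[OF f] by (simp add: mult.commute)
  also have "\<dots> = cnj (gfun f z)"
    using gfun_sums[OF f z] sums_cnj[of "\<lambda>n. gh f n * z ^ n" "gfun f z"] by (simp add: sums_iff)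
  finally show ?thesis by simp
qed

lemma gfun_0:
  assumes f: "f \<in> H2" shows "gfun f 0 = f 0"
proof -
  have "gfun f 0 = h2_coeff (gfun f) 0" by (simp add: h2_coeff_0)
  also have "\<dots> = gh f 0" by (rule gfun_coeff[OF f])
  also have "\<dots> = cnj (h2_inner (\<lambda>w. w ^ 0) f)" by (simp add: gh_def)
  also have "\<dots> = f 0" unfolding inner_mono_left by (simp add: h2_coeff_0)
  finally show ?thesis .
qed

end



definition rev_poly :: "nat \<Rightarrow> complex poly \<Rightarrow> complex poly" where
  "rev_poly d p = monom 1 (d - degree p) * reflect_poly (map_poly cnj p)"

lemma degree_cnj_poly[simp]: "degree (map_poly cnj p) = degree p"
  by (rule degree_map_poly) simp

lemma poly_rev_poly_nz:
  assumes "w \<noteq> 0" "degree p \<le> d"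
  shows "poly (rev_poly d p) w = w ^ d * cnj (poly p (1 / cnj w))"
proof -
  have "poly (rev_poly d p) w = w ^ (d - degree p) * (w ^ degree p * cnj (poly p (cnj (inverse w))))"
    unfolding rev_poly_def using assms(1)
    by (simp add: poly_monom poly_reflect_poly_nz poly_map_poly_cnj)
  also have "\<dots> = w ^ d * cnj (poly p (1 / cnj w))"
    using assms(2) by (simp add: mult.assoc[symmetric] power_add[symmetric] divide_inverse)
  finally show ?thesis .
qed

lemma poly_rev_poly_0:
  assumes "degree p \<le> d"
  shows "poly (rev_poly d p) 0 = (if degree p = d then cnj (lead_coeff p) else 0)"
proof -
  have "poly (reflect_poly (map_poly cnj p)) 0 = cnj (lead_coeff p)"
    by (simp add: poly_reflect_poly_0 coeff_map_poly)
  thus ?thesis unfolding rev_poly_def using assms by (auto simp: poly_monom)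
qed

lemma degree_rev_poly: "degree p \<le> d \<Longrightarrow> degree (rev_poly d p) \<le> d"
  unfolding rev_poly_def
  by (rule order_trans[OF degree_mult_le]) (use degree_reflect_poly_le[of "map_poly cnj p"] in \<open>auto simp: degree_monom_eq\<close>)

lemma rev_poly_nz: "p \<noteq> 0 \<Longrightarrow> rev_poly d p \<noteq> 0"
  unfolding rev_poly_def
  by (auto simp: reflect_poly_eq_0_iff map_poly_eq_0_iff)

locale ratU =
  fixes p q :: "complex poly" and d :: nat
  assumes RU: "in_RatU p q" and dd: "d = rat_degree p q" and dpos: "d > 0"
begin

lemma q_nz: "q \<noteq> 0" and cop: "coprime p q"
  and inU: "\<And>z. cmod z < 1 \<Longrightarrow> poly q z \<noteq> 0 \<and> cmod (poly p z / poly q z) < 1"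
  using RU unfolding in_RatU_def by auto

lemma p_nz: "p \<noteq> 0"
proof
  assume "p = 0"
  hence "is_unit q" using cop by (simp add: coprime_0_left_iff)
  hence "degree q = 0" using q_nz is_unit_iff_degree by blast
  thus False using dpos dd \<open>p = 0\<close> by (simp add: rat_degree_def)
qed

lemma deg_le: "degree p \<le> d" "degree q \<le> d"
  using dd unfolding rat_degree_def by auto

lemma deg_max: "degree p = d \<or> degree q = d"
  using dd unfolding rat_degree_def by (auto simp: max_def)

lemma no_common_root: "poly p w = 0 \<Longrightarrow> poly q w = 0 \<Longrightarrow> False"
  using coprime_poly_0[OF cop, of w] by auto

lemma le_disc:
  assumes "cmod v \<le> 1" shows "poly q v \<noteq> 0" "cmod (poly p v) \<le> cmod (poly q v)"
proof -
  have A: "cmod (poly p v) \<le> cmod (poly q v)"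
  proof (cases "cmod v < 1")
    case True
    with inU[OF True] show ?thesis by (auto simp: norm_divide divide_less_eq)
  next
    case False
    have ev: "eventually (\<lambda>t. cmod (poly p (of_real t * v)) \<le> cmod (poly q (of_real t * v))) (at_left (1::real))"
    proof (rule eventually_mono)
      show "eventually (\<lambda>x. x \<in> {0<..<1}) (at_left (1::real))" by (rule eventually_at_left_real) simp
    next
      fix t :: real assume t: "t \<in> {0<..<1}"
      have "t * cmod v \<le> t" using t assms by (intro mult_left_le) auto
      moreover have "t < 1" using t by simp
      ultimately have lt: "t * cmod v < 1" by (rule le_less_trans)
      have "cmod (of_real t * v) = t * cmod v" using t by (simp add: norm_mult)
      hence "cmod (of_real t * v) < 1" using lt by simp
      from inU[OF this] show "cmod (poly p (of_real t * v)) \<le> cmod (poly q (of_real t * v))"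
        by (auto simp: norm_divide divide_less_eq)
    qed
    have "((\<lambda>t. cmod (poly p (of_real t * v))) \<longlongrightarrow> cmod (poly p (of_real 1 * v))) (at_left (1::real))"
      by (intro tendsto_intros)
    moreover have "((\<lambda>t. cmod (poly q (of_real t * v))) \<longlongrightarrow> cmod (poly q (of_real 1 * v))) (at_left (1::real))"
      by (intro tendsto_intros)
    ultimately show ?thesis using tendsto_le[OF _ _ _ ev] by simp
  qed
  thus "cmod (poly p v) \<le> cmod (poly q v)" .
  show "poly q v \<noteq> 0"
  proof
    assume "poly q v = 0"
    with A have "poly p v = 0" by simp
    with \<open>poly q v = 0\<close> show False using no_common_root by blast
  qed
qed

definition \<phi> :: "complex \<Rightarrow> complex" where "\<phi> w = poly p w / poly q w"

lemma selfmap: "selfmap \<phi>"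
proof
  show "\<phi> holomorphic_on ball 0 1" unfolding \<phi>_def[abs_def]
    by (intro holomorphic_intros) (use inU in auto)
  show "cmod (\<phi> w) < 1" if "cmod w < 1" for w unfolding \<phi>_def using inU[OF that] by simp
qed

definition P where "P = rev_poly d p"
definition Q where "Q = rev_poly d q"

lemma P_nz: "P \<noteq> 0" unfolding P_def by (rule rev_poly_nz[OF p_nz])

lemma poly_P: "w \<noteq> 0 \<Longrightarrow> poly P w = w ^ d * cnj (poly p (1 / cnj w))"
  unfolding P_def by (rule poly_rev_poly_nz[OF _ deg_le(1)])
lemma poly_Q: "w \<noteq> 0 \<Longrightarrow> poly Q w = w ^ d * cnj (poly q (1 / cnj w))"
  unfolding Q_def by (rule poly_rev_poly_nz[OF _ deg_le(2)])
lemma P0: "poly P 0 = (if degree p = d then cnj (lead_coeff p) else 0)"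
  unfolding P_def by (rule poly_rev_poly_0[OF deg_le(1)])
lemma Q0: "poly Q 0 = (if degree q = d then cnj (lead_coeff q) else 0)"
  unfolding Q_def by (rule poly_rev_poly_0[OF deg_le(2)])
lemma degP: "degree P \<le> d" unfolding P_def by (rule degree_rev_poly[OF deg_le(1)])
lemma degQ: "degree Q \<le> d" unfolding Q_def by (rule degree_rev_poly[OF deg_le(2)])

lemma phi_e_Some:
  "phi_e p q (Some w) = (if poly P w = 0 then None else Some (poly Q w / poly P w))"
proof (cases "w = 0")
  case False
  define v where "v = 1 / cnj w"
  have v0: "v \<noteq> 0" using False by (simp add: v_def)
  have rw: "rho (Some w) = Some v" using False by (simp add: rho_def v_def)
  have Pw: "poly P w = w ^ d * cnj (poly p v)" and Qw: "poly Q w = w ^ d * cnj (poly q v)"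
    using poly_P[OF False] poly_Q[OF False] by (simp_all add: v_def)
  have wd: "w ^ d \<noteq> 0" using False by simp
  have st: "phi_e p q (Some w) = rho (rat_eval p q (Some v))" by (simp add: phi_e_def rw)
  show ?thesis
  proof (cases "poly q v = 0")
    case True
    hence "poly p v \<noteq> 0" using no_common_root by blast
    hence "poly P w \<noteq> 0" "poly Q w = 0" using True wd by (simp_all add: Pw Qw)
    moreover have "rat_eval p q (Some v) = None" using True by (simp add: rat_eval_def)
    ultimately show ?thesis unfolding st by (simp add: rho_def)
  next
    case qv: False
    have re: "rat_eval p q (Some v) = Some (poly p v / poly q v)" using qv by (simp add: rat_eval_def)
    show ?thesis
    proof (cases "poly p v = 0")
      case True
      hence "poly P w = 0" by (simp add: Pw)
      thus ?thesis unfolding st re using True by (simp add: rho_def)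
    next
      case pv: False
      have "1 / cnj (poly p v / poly q v) = poly Q w / poly P w"
        using wd pv qv by (simp add: Pw Qw)
      moreover have "poly P w \<noteq> 0" using pv wd by (simp add: Pw)
      ultimately show ?thesis unfolding st re using qv pv by (simp add: rho_def)
    qed
  qed
next
  case True
  have r0: "rho (Some 0) = None" by (simp add: rho_def)
  have lp: "lead_coeff p \<noteq> 0" using p_nz by simp
  have lq: "lead_coeff q \<noteq> 0" using q_nz by simp
  show ?thesis
  proof (cases "degree q < degree p")
    case True
    hence "degree p = d" "degree q \<noteq> d" using deg_max deg_le by auto
    thus ?thesis using \<open>w = 0\<close> True lp by (simp add: phi_e_def r0 rat_eval_def rho_def P0 Q0)
  next
    case False
    show ?thesis
    proof (cases "degree p = degree q")
      case True
      hence "degree p = d" "degree q = d" using deg_max by auto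
      thus ?thesis using \<open>w = 0\<close> True lp lq by (simp add: phi_e_def r0 rat_eval_def rho_def P0 Q0)
    next
      case F2: False
      hence "degree q = d" "degree p \<noteq> d" using deg_max deg_le False by auto
      thus ?thesis using \<open>w = 0\<close> False F2 by (simp add: phi_e_def r0 rat_eval_def rho_def P0 Q0)
    qed
  qed
qed

lemma phi_e_None_not: "cmod z < 1 \<Longrightarrow> phi_e p q None \<noteq> Some z"
proof -
  assume z: "cmod z < 1"
  have q0: "poly q 0 \<noteq> 0" using inU[of 0] by simp
  have l: "cmod (poly p 0 / poly q 0) < 1" using inU[of 0] by simp
  show ?thesis
  proof (cases "poly p 0 / poly q 0 = 0")
    case True thus ?thesis using q0 by (simp add: phi_e_def rho_def rat_eval_def)
  next
    case False
    have "cmod (1 / cnj (poly p 0 / poly q 0)) > 1" using l False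
      by (simp add: norm_divide)
    thus ?thesis using q0 False z by (auto simp: phi_e_def rho_def rat_eval_def)
  qed
qed

lemma phi_e_c_eq: "poly P w \<noteq> 0 \<Longrightarrow> phi_e_c p q w = poly Q w / poly P w"
  unfolding phi_e_c_def phi_e_Some by simp

end



context ratU
begin

definition SS :: "complex \<Rightarrow> complex set" where "SS z = {w. phi_e p q (Some w) = Some z}"
definition Rz :: "complex \<Rightarrow> complex poly" where "Rz z = Q - smult z P"

lemma SS_card:
  assumes z: "cmod z < 1" and rv: "regular_value (phi_e p q) d (Some z)"
  shows "finite (SS z)" "card (SS z) = d"
proof -
  have e: "phi_e p q -` {Some z} = Some ` SS z"
  proof (intro set_eqI iffI)
    fix x assume "x \<in> phi_e p q -` {Some z}"
    thus "x \<in> Some ` SS z" using phi_e_None_not[OF z] by (cases x) (auto simp: SS_def)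
  qed (auto simp: SS_def)
  from rv have "finite (Some ` SS z)" "card (Some ` SS z) = d" unfolding regular_value_def e by auto
  thus "finite (SS z)" "card (SS z) = d" by (auto simp: card_image finite_image_iff)
qed

lemma SS_root: "w \<in> SS z \<Longrightarrow> poly (Rz z) w = 0 \<and> poly P w \<noteq> 0"
  unfolding SS_def Rz_def phi_e_Some by (auto split: if_splits)

lemma SS_iff: "w \<in> SS z \<longleftrightarrow> poly P w \<noteq> 0 \<and> poly Q w = z * poly P w"
  unfolding SS_def phi_e_Some by (auto simp: field_simps)

lemma Rz_nz:
  assumes z: "cmod z < 1" and rv: "regular_value (phi_e p q) d (Some z)"
  shows "Rz z \<noteq> 0"
proof
  assume R0: "Rz z = 0"
  have "{w. poly P w \<noteq> 0} \<subseteq> SS z"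
  proof
    fix w assume "w \<in> {w. poly P w \<noteq> 0}"
    moreover have "poly Q w = z * poly P w" using arg_cong[OF R0, of "\<lambda>r. poly r w"] by (simp add: Rz_def)
    ultimately show "w \<in> SS z" unfolding SS_iff by simp
  qed
  hence "finite {w. poly P w \<noteq> 0}" using SS_card(1)[OF z rv] by (rule finite_subset)
  moreover have "finite {w. poly P w = 0}" by (rule poly_roots_finite[OF P_nz])
  ultimately have "finite ({w. poly P w \<noteq> 0} \<union> {w. poly P w = 0})" by simp
  moreover have "{w. poly P w \<noteq> 0} \<union> {w. poly P w = 0} = (UNIV :: complex set)" by auto
  ultimately show False using infinite_UNIV_char_0[where 'a=complex] by simp
qed

lemma deg_Rz: "degree (Rz z) \<le> d"
  unfolding Rz_def by (rule degree_diff_le[OF degQ order_trans[OF degree_smult_le degP]])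

lemma roots_Rz:
  assumes z: "cmod z < 1" and rv: "regular_value (phi_e p q) d (Some z)"
  shows "{w. poly (Rz z) w = 0} = SS z"
proof -
  have fin: "finite {w. poly (Rz z) w = 0}" by (rule poly_roots_finite[OF Rz_nz[OF z rv]])
  have sub: "SS z \<subseteq> {w. poly (Rz z) w = 0}" using SS_root by auto
  have "card {w. poly (Rz z) w = 0} \<le> d"
    using card_poly_roots_bound[OF Rz_nz[OF z rv]] deg_Rz by (rule order_trans)
  hence "card (SS z) = card {w. poly (Rz z) w = 0}"
    using card_mono[OF fin sub] SS_card[OF z rv] by simp
  from card_subset_eq[OF fin sub this] show ?thesis ..
qed

lemma simple_roots:
  assumes z: "cmod z < 1" and rv: "regular_value (phi_e p q) d (Some z)" and w: "w \<in> SS z"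
  shows "poly (pderiv (Rz z)) w \<noteq> 0"
proof -
  define R where "R = Rz z"
  have Rnz: "R \<noteq> 0" unfolding R_def by (rule Rz_nz[OF z rv])
  have fS: "finite (SS z)" and cS: "card (SS z) = d" using SS_card[OF z rv] by auto
  have rt: "{x. poly R x = 0} = SS z" unfolding R_def by (rule roots_Rz[OF z rv])
  have ord_pos: "order x R \<ge> 1" if "x \<in> SS z" for x
    using that rt Rnz order_root[of R x] by auto
  have sz: "size (proots R) = (\<Sum>x\<in>SS z. order x R)"
    unfolding size_multiset_overloaded_eq set_count_proots[OF Rnz] rt
    by (intro sum.cong refl) (simp add: count_proots[OF Rnz])
  have szle: "size (proots R) \<le> d" using size_proots_le[of R] deg_Rz[of z] by (simp add: R_def)
  have ord1: "order x R = 1" if x: "x \<in> SS z" for x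
  proof (rule ccontr)
    assume "order x R \<noteq> 1"
    hence o2: "order x R \<ge> 2" using ord_pos[OF x] by simp
    have "(\<Sum>y\<in>SS z. order y R) = order x R + (\<Sum>y\<in>SS z - {x}. order y R)"
      by (rule sum.remove[OF fS x])
    also have "(\<Sum>y\<in>SS z - {x}. order y R) \<ge> (\<Sum>y\<in>SS z - {x}. 1)"
      by (intro sum_mono ord_pos) auto
    hence "order x R + (\<Sum>y\<in>SS z - {x}. order y R) \<ge> 2 + (card (SS z) - 1)"
      using o2 card_Diff_singleton[OF x] by simp
    finally have "size (proots R) \<ge> 2 + (d - 1)" unfolding sz cS .
    thus False using szle dpos by simp
  qed
  have "rsquarefree R" unfolding rsquarefree_def
  proof (intro conjI allI Rnz)
    fix a show "order a R = 0 \<or> order a R = 1"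
    proof (cases "a \<in> SS z")
      case True thus ?thesis using ord1 by simp
    next
      case False
      hence "poly R a \<noteq> 0" using rt by auto
      thus ?thesis using order_root[of R a] by simp
    qed
  qed
  moreover have "poly R w = 0" using rt w by auto
  ultimately show ?thesis unfolding rsquarefree_roots R_def by blast
qed

lemma SS_in_disc:
  assumes z: "cmod z < 1" and w: "w \<in> SS z"
  shows "cmod w < 1"
proof (rule ccontr)
  assume "\<not> cmod w < 1"
  hence w1: "cmod w \<ge> 1" by simp
  hence w0: "w \<noteq> 0" by auto
  define v where "v = 1 / cnj w"
  have v1: "cmod v \<le> 1" using w1 by (simp add: v_def norm_divide divide_le_eq)
  have Pw: "poly P w = w ^ d * cnj (poly p v)" and Qw: "poly Q w = w ^ d * cnj (poly q v)"
    using poly_P[OF w0] poly_Q[OF w0] by (simp_all add: v_def)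
  from w have Pn: "poly P w \<noteq> 0" and QP: "poly Q w = z * poly P w" unfolding SS_iff by auto
  have pv: "poly p v \<noteq> 0" using Pn Pw by auto
  have "cnj (poly q v) = z * cnj (poly p v)" using QP w0 by (simp add: Pw Qw)
  hence "cmod (poly q v) = cmod z * cmod (poly p v)"
    by (metis complex_mod_cnj norm_mult)
  also have "\<dots> < cmod (poly p v)" using z pv by simp
  finally show False using le_disc(2)[OF v1] by simp
qed

lemma deriv_phi_e:
  assumes w: "w \<in> SS z"
  shows "deriv (phi_e_c p q) w = poly (pderiv (Rz z)) w / poly P w"
proof -
  from w have Pn: "poly P w \<noteq> 0" and QP: "poly Q w = z * poly P w" unfolding SS_iff by auto
  have D: "((\<lambda>u. poly Q u / poly P u) has_field_derivative
      (poly (pderiv Q) w * poly P w - poly Q w * poly (pderiv P) w) / (poly P w * poly P w)) (at w)"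
    by (rule DERIV_divide[OF poly_DERIV poly_DERIV Pn])
  have "(phi_e_c p q has_field_derivative
      (poly (pderiv Q) w * poly P w - poly Q w * poly (pderiv P) w) / (poly P w * poly P w)) (at w)"
  proof (rule has_field_derivative_transform_within_open[OF D])
    show "open {u. poly P u \<noteq> 0}" by (rule open_Collect_neq) (auto intro: continuous_intros)
  qed (use Pn phi_e_c_eq in auto)
  hence "deriv (phi_e_c p q) w = (poly (pderiv Q) w * poly P w - poly Q w * poly (pderiv P) w) / (poly P w * poly P w)"
    by (rule DERIV_imp_deriv)
  also have "\<dots> = poly (pderiv (Rz z)) w / poly P w"
    using Pn unfolding QP by (simp add: Rz_def pderiv_diff pderiv_smult field_simps)
  finally show ?thesis .
qed

end



lemma h2_coeff_cong:
  assumes "u holomorphic_on ball 0 1" "v holomorphic_on ball 0 1" "\<And>w. cmod w < 1 \<Longrightarrow> u w = v w"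
  shows "h2_coeff u n = h2_coeff v n"
  unfolding h2_coeff_via_int[OF assms(1)] h2_coeff_via_int[OF assms(2)]
  using assms(3) by (simp add: norm_mult)

lemma aux1: fixes u X Y c :: complex shows "u \<noteq> 0 \<Longrightarrow> X / (u * Y) * (c * u) = c * (X / Y)"
  by (cases "Y = 0") (simp_all add: field_simps)

lemma aux2: fixes u w X Y :: complex shows "X / (u * ((u - w) * Y)) = (X / (u * Y)) / (u - w)"
  by (simp add: divide_divide_eq_left mult_ac)

context ratU
begin

sublocale sm: selfmap \<phi> by (rule selfmap)

definition Dz :: "complex \<Rightarrow> complex poly" where "Dz z = q - smult (cnj z) p"

lemma Dz_nz_disc:
  assumes z: "cmod z < 1" and v: "cmod v \<le> 1" shows "poly (Dz z) v \<noteq> 0"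
proof
  assume "poly (Dz z) v = 0"
  hence e: "poly q v = cnj z * poly p v" by (simp add: Dz_def)
  have qv: "poly q v \<noteq> 0" by (rule le_disc(1)[OF v])
  have "cmod (poly q v) = cmod z * cmod (poly p v)" using e by (simp add: norm_mult)
  also have "\<dots> \<le> cmod z * cmod (poly q v)" by (intro mult_left_mono le_disc(2)[OF v]) auto
  also have "\<dots> < cmod (poly q v)" using z qv by simp
  finally show False by simp
qed

lemma exists_Rk:
  assumes z: "cmod z < 1"
  obtains Rk where "1 < Rk" "\<And>v. cmod v < Rk \<Longrightarrow> poly (Dz z) v \<noteq> 0"
proof -
  have Dnz: "Dz z \<noteq> 0" using Dz_nz_disc[OF z, of 0] by auto
  define A where "A = {v. poly (Dz z) v = 0}"
  have fA: "finite A" unfolding A_def by (rule poly_roots_finite[OF Dnz])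
  define Rk where "Rk = Min (insert 2 (cmod ` A))"
  have out: "cmod v > 1" if "v \<in> A" for v
    using Dz_nz_disc[OF z, of v] that by (force simp: A_def)
  have "1 < Rk" unfolding Rk_def using fA out by (subst Min_gr_iff) auto
  moreover have "poly (Dz z) v \<noteq> 0" if "cmod v < Rk" for v
  proof
    assume "poly (Dz z) v = 0"
    hence "v \<in> A" by (simp add: A_def)
    hence "Rk \<le> cmod v" unfolding Rk_def using fA by (intro Min_le) auto
    thus False using that by simp
  qed
  ultimately show ?thesis using that by blast
qed

lemma kern_phi_eq:
  assumes z: "cmod z < 1" and w: "cmod w < 1"
  shows "kern z (\<phi> w) = poly q w / poly (Dz z) w"
proof -
  have qw: "poly q w \<noteq> 0" using inU[OF w] by simp
  have dw: "poly (Dz z) w \<noteq> 0" using Dz_nz_disc[OF z, of w] w by simp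
  hence "poly q w - cnj z * poly p w \<noteq> 0" by (simp add: Dz_def)
  hence dd: "1 - cnj z * (poly p w / poly q w) = (poly q w - cnj z * poly p w) / poly q w"
    using qw by (simp add: field_simps)
  show ?thesis unfolding kern_def \<phi>_def dd using qw \<open>poly q w - cnj z * poly p w \<noteq> 0\<close>
    by (simp add: Dz_def)
qed

lemma cnj_k_circle:
  assumes r: "0 < r"
  shows "cnj (poly q (of_real (1/r) * cis2 t) / poly (Dz z) (of_real (1/r) * cis2 t)) =
         poly Q (of_real r * cis2 t) / poly (Rz z) (of_real r * cis2 t)"
proof -
  define w where "w = of_real r * cis2 t"
  have w0: "w \<noteq> 0" using r by (simp add: w_def)
  have v: "of_real (1/r) * cis2 t = 1 / cnj w"
    using r by (simp add: w_def cnj_cis2 field_simps)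
  define v where "v = 1 / cnj w"
  have Pw: "poly P w = w ^ d * cnj (poly p v)" and Qw: "poly Q w = w ^ d * cnj (poly q v)"
    using poly_P[OF w0] poly_Q[OF w0] by (simp_all add: v_def)
  have Rw: "poly (Rz z) w = w ^ d * cnj (poly (Dz z) v)"
    by (simp add: Rz_def Dz_def Pw Qw algebra_simps)
  have wd: "w ^ d \<noteq> 0" using w0 by simp
  have "cnj (poly q v / poly (Dz z) v) = cnj (poly q v) / cnj (poly (Dz z) v)" by simp
  also have "\<dots> = (w ^ d * cnj (poly q v)) / (w ^ d * cnj (poly (Dz z) v))"
    using wd by (rule mult_divide_mult_cancel_left[symmetric])
  finally show ?thesis unfolding v w_def[symmetric] v_def[symmetric] Qw Rw .
qed

lemma residue_formula:
  assumes z: "cmod z < 1" "z \<noteq> 0" and rv: "regular_value (phi_e p q) d (Some z)"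
    and R0: "poly (Rz z) 0 \<noteq> 0" and f: "f \<in> H2"
  shows "sm.gfun f z = f 0 * poly Q 0 / poly (Rz z) 0 +
           (\<Sum>w\<in>SS z. f w * poly Q w / (w * poly (pderiv (Rz z)) w))"
proof -
  define k where "k v = poly q v / poly (Dz z) v" for v
  obtain Rk where Rk: "1 < Rk" "\<And>v. cmod v < Rk \<Longrightarrow> poly (Dz z) v \<noteq> 0" using exists_Rk[OF z(1)] by blast
  have kh: "k holomorphic_on ball 0 Rk" unfolding k_def[abs_def] by (intro holomorphic_intros) (use Rk in auto)
  have fh: "f holomorphic_on ball 0 1" by (rule H2_D(1)[OF f])
  define Kf where "Kf w = kern z (\<phi> w)" for w
  have KfH: "Kf \<in> H2" unfolding Kf_def by (rule sm.C_H2[OF kern_H2[OF z(1)]])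
  have hc: "h2_coeff Kf n = h2_coeff k n" for n
  proof (rule h2_coeff_cong[OF H2_D(1)[OF KfH]])
    show "k holomorphic_on ball 0 1" by (rule holomorphic_on_subset[OF kh]) (use Rk in auto)
  qed (simp add: Kf_def k_def kern_phi_eq[OF z(1)])
  have s1: "(\<lambda>n. h2_coeff Kf n * cnj (h2_coeff f n)) sums h2_inner Kf f"
    unfolding h2_inner_def by (rule summable_sums[OF inner_summable[OF KfH f]])
  have s2: "(\<lambda>n. h2_coeff f n * cnj (h2_coeff k n)) sums sm.gfun f z"
    using iffD2[OF sums_cnj s1] unfolding sm.gfun_eval[OF f z(1)] Kf_def[symmetric] hc
    by (simp add: mult.commute)
  have fS: "finite (SS z)" using SS_card[OF z(1) rv] by simp
  define m where "m = Max (insert (1/Rk) (cmod ` SS z))"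
  have m1: "m < 1" unfolding m_def using fS Rk SS_in_disc[OF z(1)] by (subst Max_less_iff) auto
  have mRk: "1/Rk \<le> m" unfolding m_def using fS by (intro Max_ge) auto
  have mS: "cmod w \<le> m" if "w \<in> SS z" for w unfolding m_def using fS that by (intro Max_ge) auto
  define r where "r = (m + 1) / 2"
  have r1: "r < 1" using m1 by (simp add: r_def)
  have r0: "0 < r" using mRk Rk by (simp add: r_def) (smt (verit) divide_pos_pos)
  have rk: "1/r < Rk"
  proof -
    have "1/Rk < r" using mRk m1 by (simp add: r_def)
    thus ?thesis using r0 Rk by (simp add: field_simps)
  qed
  have rS: "cmod w < r" if "w \<in> SS z" for w using mS[OF that] m1 by (simp add: r_def)
  have "(\<lambda>n. h2_coeff f n * cnj (h2_coeff k n) * of_real (r ^ n * (1/r) ^ n)) sums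
           integral {0..1} (\<lambda>t. f (of_real r * cis2 t) * cnj (k (of_real (1/r) * cis2 t)))"
    by (rule parseval[OF fh kh r0 r1]) (use r0 rk in auto)
  moreover have "r ^ n * (1/r) ^ n = 1" for n
  proof -
    have "r ^ n * (1/r) ^ n = (r * (1/r)) ^ n" by (simp only: power_mult_distrib)
    also have "r * (1/r) = 1" using r0 by simp
    finally show ?thesis by simp
  qed
  ultimately have "(\<lambda>n. h2_coeff f n * cnj (h2_coeff k n)) sums
           integral {0..1} (\<lambda>t. f (of_real r * cis2 t) * cnj (k (of_real (1/r) * cis2 t)))" by simp
  hence gI: "sm.gfun f z = integral {0..1} (\<lambda>t. f (of_real r * cis2 t) * cnj (k (of_real (1/r) * cis2 t)))"
    using s2 sums_unique2 by blast
  define G where "G t = f (of_real r * cis2 t) * (poly Q (of_real r * cis2 t) / poly (Rz z) (of_real r * cis2 t))" for t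
  have Geq: "f (of_real r * cis2 t) * cnj (k (of_real (1/r) * cis2 t)) = G t" for t
    unfolding G_def k_def cnj_k_circle[OF r0] ..
  have Gint: "G integrable_on {0..1}"
  proof -
    have "(\<lambda>t. f (of_real r * cis2 t) * cnj (k (of_real (1/r) * cis2 t))) integrable_on {0..1}"
      by (intro integrable_continuous_real continuous_intros continuous_on_circ[OF fh] continuous_on_circ[OF kh])
         (use r0 r1 rk in auto)
    thus ?thesis unfolding Geq .
  qed
  define I where "I = integral {0..1} G"
  have gI2: "sm.gfun f z = I" unfolding gI Geq I_def ..
  define F where "F u = f u * poly Q u / (u * poly (Rz z) u)" for u
  have "(F has_contour_integral (2 * of_real pi * \<i> * I)) (circlepath 0 r)"
    unfolding has_contour_integral_def I_def
  proof (rule has_integral_spike_finite[OF _ _ has_integral_mult_right[OF integrable_integral[OF Gint]], of "{}"])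
    fix t :: real assume t: "t \<in> {0..1} - {}"
    have vd: "vector_derivative (circlepath 0 r) (at t within {0..1}) = 2 * of_real pi * \<i> * (of_real r * cis2 t)"
      using t by (simp add: vector_derivative_circlepath01 cis2_def)
    define u where "u = of_real r * cis2 t"
    have u0: "u \<noteq> 0" using r0 by (simp add: u_def)
    have "F u * (2 * of_real pi * \<i> * u) = (2 * of_real pi * \<i>) * G t"
      unfolding F_def G_def u_def[symmetric] using aux1[OF u0] by simp
    thus "F (circlepath 0 r t) * vector_derivative (circlepath 0 r) (at t within {0..1}) = (2 * of_real pi * \<i>) * G t"
      unfolding vd circlepath0 u_def .
  qed simp
  hence CI: "contour_integral (circlepath 0 r) F = 2 * of_real pi * \<i> * I"
    by (rule contour_integral_unique)
  define pts where "pts = insert 0 (SS z)"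
  have rootsR: "poly (Rz z) u = 0 \<longleftrightarrow> u \<in> SS z" for u
    using roots_Rz[OF z(1) rv] by blast
  have ptsE: "u * poly (Rz z) u = 0 \<longleftrightarrow> u \<in> pts" for u unfolding pts_def using rootsR by auto
  have 0: "0 \<notin> SS z" using R0 rootsR by blast
  have fpts: "finite pts" unfolding pts_def using fS by simp
  have RT: "contour_integral (circlepath 0 r) F = 2 * pi * \<i> * (\<Sum>p\<in>pts. winding_number (circlepath 0 r) p * residue F p)"
  proof (rule Residue_theorem[of "ball 0 1"])
    show "open (ball (0::complex) 1)" "connected (ball (0::complex) 1)" by (auto simp: convex_connected)
    show "finite pts" by (rule fpts)
    show "F holomorphic_on ball 0 1 - pts" unfolding F_def[abs_def]
      by (intro holomorphic_intros holomorphic_on_subset[OF fh]) (auto simp: ptsE[symmetric])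
    show "valid_path (circlepath 0 r)" by simp
    show "pathfinish (circlepath 0 r) = pathstart (circlepath 0 r)" by simp
    show "path_image (circlepath 0 r) \<subseteq> ball 0 1 - pts"
      using r0 r1 rS by (force simp: path_image_circlepath_nonneg pts_def)
    show "\<forall>u. u \<notin> ball 0 1 \<longrightarrow> winding_number (circlepath 0 r) u = 0"
    proof (intro allI impI)
      fix u :: complex assume "u \<notin> ball 0 1"
      hence "u \<notin> cball 0 r" using r1 by auto
      thus "winding_number (circlepath 0 r) u = 0"
        by (intro winding_number_zero_outside[of _ "cball 0 r"])
           (use r0 in \<open>auto simp: path_image_circlepath_nonneg\<close>)
    qed
  qed
  have wn: "winding_number (circlepath 0 r) p = 1" if "p \<in> pts" for p
    using that r0 rS by (intro winding_number_circlepath) (auto simp: pts_def)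
  have "2 * of_real pi * \<i> * I = 2 * pi * \<i> * (\<Sum>p\<in>pts. residue F p)"
    using RT CI wn by simp
  hence Isum: "I = (\<Sum>p\<in>pts. residue F p)" by simp
  also have "\<dots> = residue F 0 + (\<Sum>p\<in>SS z. residue F p)"
    unfolding pts_def using fS 0 by simp
  finally have Isum2: "I = residue F 0 + (\<Sum>p\<in>SS z. residue F p)" .
  have res0: "residue F 0 = f 0 * poly Q 0 / poly (Rz z) 0"
  proof -
    define G0 where "G0 u = f u * poly Q u / poly (Rz z) u" for u
    have "F = (\<lambda>u. G0 u / (u - 0))" by (rule ext) (simp add: F_def G0_def mult.commute)
    moreover have "residue (\<lambda>u. G0 u / (u - 0)) 0 = G0 0"
    proof (rule residue_simple)
      show "open (ball 0 1 \<inter> {u. poly (Rz z) u \<noteq> 0})"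
        by (intro open_Int open_ball open_Collect_neq) (auto intro: continuous_intros)
      show "(0::complex) \<in> ball 0 1 \<inter> {u. poly (Rz z) u \<noteq> 0}" using R0 by simp
      show "G0 holomorphic_on ball 0 1 \<inter> {u. poly (Rz z) u \<noteq> 0}" unfolding G0_def[abs_def]
        by (intro holomorphic_intros holomorphic_on_subset[OF fh]) auto
    qed
    ultimately show ?thesis by (simp add: G0_def)
  qed
  have resw: "residue F w = f w * poly Q w / (w * poly (pderiv (Rz z)) w)" if w: "w \<in> SS z" for w
  proof -
    have "poly (Rz z) w = 0" using rootsR w by simp
    hence "[:-w, 1:] dvd Rz z" using poly_eq_0_iff_dvd by blast
    then obtain R1 where R1: "Rz z = [:-w, 1:] * R1" by (rule dvdE)
    have pR: "poly (Rz z) u = (u - w) * poly R1 u" for u unfolding R1 by (simp add: algebra_simps)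
    have dR: "poly (pderiv (Rz z)) w = poly R1 w" unfolding R1 pderiv_mult by (simp add: pderiv_pCons)
    have R1w: "poly R1 w \<noteq> 0" using simple_roots[OF z(1) rv w] dR by simp
    have w0: "w \<noteq> 0" using w 0 by auto
    define Gw where "Gw u = f u * poly Q u / (u * poly R1 u)" for u
    have "F = (\<lambda>u. Gw u / (u - w))" by (rule ext) (simp only: F_def Gw_def pR aux2)
    moreover have "residue (\<lambda>u. Gw u / (u - w)) w = Gw w"
    proof (rule residue_simple)
      show "open (ball 0 1 \<inter> {u. u * poly R1 u \<noteq> 0})"
        by (intro open_Int open_ball open_Collect_neq continuous_intros continuous_on_poly continuous_on_id)
      show "w \<in> ball 0 1 \<inter> {u. u * poly R1 u \<noteq> 0}" using SS_in_disc[OF z(1) w] w0 R1w by simp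
      show "Gw holomorphic_on ball 0 1 \<inter> {u. u * poly R1 u \<noteq> 0}" unfolding Gw_def[abs_def]
        by (intro holomorphic_intros holomorphic_on_subset[OF fh]) auto
    qed
    ultimately show ?thesis by (simp add: Gw_def dR)
  qed
  show ?thesis unfolding gI2 Isum2 res0 using resw by simp
qed

end



lemma aux3: fixes F z P w R :: complex
  shows "P \<noteq> 0 \<Longrightarrow> F * (z * P) / (w * R) = z * (F / (w * (R / P)))"
  by (cases "w = 0"; cases "R = 0") (simp_all add: field_simps)

context ratU
begin

lemma comp_adj_eq:
  assumes f: "f \<in> H2" shows "comp_adj p q f = sm.gfun f"
  unfolding comp_adj_def
proof (rule the_equality)
  have co: "comp_op p q h = (\<lambda>w. h (\<phi> w))" for h unfolding comp_op_def \<phi>_def ..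
  show "sm.gfun f \<in> H2 \<and> (\<forall>w. 1 \<le> cmod w \<longrightarrow> sm.gfun f w = 0) \<and>
        (\<forall>h\<in>H2. h2_inner (comp_op p q h) f = h2_inner h (sm.gfun f))"
    unfolding co using sm.gfun_H2[OF f] sm.gfun_out sm.gfun_adj[OF f] by auto
  fix g assume "g \<in> H2 \<and> (\<forall>w. 1 \<le> cmod w \<longrightarrow> g w = 0) \<and> (\<forall>h\<in>H2. h2_inner (comp_op p q h) f = h2_inner h g)"
  thus "g = sm.gfun f" unfolding co using sm.adj_unique[OF f] by blast
qed

lemma sum_conv:
  assumes z: "cmod z < 1"
  shows "(\<Sum>w\<in>SS z. f w * poly Q w / (w * poly (pderiv (Rz z)) w)) =
         z * (\<Sum>w\<in>{w. phi_e p q (Some w) = Some z}. f w / (w * deriv (phi_e_c p q) w))"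
  unfolding SS_def[symmetric] sum_distrib_left
proof (rule sum.cong[OF refl])
  fix w assume w: "w \<in> SS z"
  from w have Pn: "poly P w \<noteq> 0" and QP: "poly Q w = z * poly P w" unfolding SS_iff by auto
  show "f w * poly Q w / (w * poly (pderiv (Rz z)) w) = z * (f w / (w * deriv (phi_e_c p q) w))"
    unfolding deriv_phi_e[OF w] QP by (rule aux3[OF Pn])
qed

lemma final:
  assumes z: "cmod z < 1" and rv: "regular_value (phi_e p q) d (Some z)" and f: "f \<in> H2"
  shows "(\<forall>c. rat_eval p q None = Some c \<and> rho (Some c) \<noteq> Some z \<longrightarrow>
            comp_adj p q f z = f 0 / (1 - cnj c * z)
              + z * (\<Sum>w\<in>{w. phi_e p q (Some w) = Some z}. f w / (w * deriv (phi_e_c p q) w)))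
       \<and> (rat_eval p q None = None \<longrightarrow>
            (z \<noteq> 0 \<longrightarrow> comp_adj p q f z =
               z * (\<Sum>w\<in>{w. phi_e p q (Some w) = Some z}. f w / (w * deriv (phi_e_c p q) w)))
            \<and> comp_adj p q f 0 = f 0)"
proof (intro conjI allI impI)
  have lp: "lead_coeff p \<noteq> 0" using p_nz by simp
  have lq: "lead_coeff q \<noteq> 0" using q_nz by simp
  show "comp_adj p q f 0 = f 0" unfolding comp_adj_eq[OF f] by (rule sm.gfun_0[OF f])
  {
    fix c assume c: "rat_eval p q None = Some c \<and> rho (Some c) \<noteq> Some z"
    show "comp_adj p q f z = f 0 / (1 - cnj c * z)
              + z * (\<Sum>w\<in>{w. phi_e p q (Some w) = Some z}. f w / (w * deriv (phi_e_c p q) w))"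
    proof (cases "z = 0")
      case True
      thus ?thesis unfolding comp_adj_eq[OF f] using sm.gfun_0[OF f] by simp
    next
      case z0: False
      have nlt: "\<not> degree q < degree p" using c by (auto simp: rat_eval_def split: if_splits)
      have key: "poly (Rz z) 0 \<noteq> 0 \<and> poly Q 0 / poly (Rz z) 0 = 1 / (1 - cnj c * z)"
      proof (cases "degree p = degree q")
        case True
        hence dp: "degree p = d" "degree q = d" using deg_max by auto
        have cc: "c = lead_coeff p / lead_coeff q" using c True by (simp add: rat_eval_def)
        have c0: "c \<noteq> 0" using cc lp lq by simp
        have rc: "rho (Some c) = Some (1 / cnj c)" using c0 by (simp add: rho_def)
        have zc: "z \<noteq> 1 / cnj c" using c rc by auto
        have R0: "poly (Rz z) 0 = cnj (lead_coeff q) - z * cnj (lead_coeff p)"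
          using dp by (simp add: Rz_def P0 Q0)
        have Rn: "poly (Rz z) 0 \<noteq> 0"
        proof
          assume "poly (Rz z) 0 = 0"
          hence "z = cnj (lead_coeff q) / cnj (lead_coeff p)" using lp unfolding R0 by (simp add: field_simps)
          thus False using zc cc by simp
        qed
        moreover have "poly Q 0 / poly (Rz z) 0 = 1 / (1 - cnj c * z)"
          using Rn lp lq dp unfolding R0 by (simp add: Q0 cc field_simps)
        ultimately show ?thesis by simp
      next
        case False
        hence dp: "degree q = d" "degree p \<noteq> d" using deg_max deg_le nlt by auto
        have cc: "c = 0" using c False nlt by (simp add: rat_eval_def)
        have "poly (Rz z) 0 = cnj (lead_coeff q)" using dp by (simp add: Rz_def P0 Q0)
        thus ?thesis using lq dp cc by (simp add: Q0)
      qed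
      have "comp_adj p q f z = f 0 * poly Q 0 / poly (Rz z) 0 +
           (\<Sum>w\<in>SS z. f w * poly Q w / (w * poly (pderiv (Rz z)) w))"
        unfolding comp_adj_eq[OF f] by (rule residue_formula[OF z z0 rv _ f]) (use key in simp)
      also have "f 0 * poly Q 0 / poly (Rz z) 0 = f 0 / (1 - cnj c * z)"
        using key by (simp add: mult_divide_mult_cancel_left_if times_divide_eq_right[symmetric])
      finally show ?thesis unfolding sum_conv[OF z] .
    qed
  }
  {
    assume N: "rat_eval p q None = None" and z0: "z \<noteq> 0"
    have lt: "degree q < degree p" using N by (auto simp: rat_eval_def split: if_splits)
    hence dp: "degree p = d" "degree q \<noteq> d" using deg_max deg_le by auto
    have Q00: "poly Q 0 = 0" using dp by (simp add: Q0)
    have R0: "poly (Rz z) 0 = - z * cnj (lead_coeff p)" using dp by (simp add: Rz_def P0 Q0)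
    have Rn: "poly (Rz z) 0 \<noteq> 0" unfolding R0 using z0 lp by simp
    have "comp_adj p q f z = f 0 * poly Q 0 / poly (Rz z) 0 +
           (\<Sum>w\<in>SS z. f w * poly Q w / (w * poly (pderiv (Rz z)) w))"
      unfolding comp_adj_eq[OF f] by (rule residue_formula[OF z z0 rv Rn f])
    thus "comp_adj p q f z = z * (\<Sum>w\<in>{w. phi_e p q (Some w) = Some z}. f w / (w * deriv (phi_e_c p q) w))"
      unfolding sum_conv[OF z] Q00 by simp
  }
qed

end

theorem corollary2p2:
  fixes p q :: "complex poly" and f :: "complex \<Rightarrow> complex" and z :: complex and d :: nat
  assumes "in_RatU p q"
    and "d = rat_degree p q" and "d > 0"
    and "cmod z < 1"
    and "regular_value (phi_e p q) d (Some z)"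
    and "f \<in> H2"
  shows "(\<forall>c. rat_eval p q None = Some c \<and> rho (Some c) \<noteq> Some z \<longrightarrow>
            comp_adj p q f z = f 0 / (1 - cnj c * z)
              + z * (\<Sum>w\<in>{w. phi_e p q (Some w) = Some z}. f w / (w * deriv (phi_e_c p q) w)))
       \<and> (rat_eval p q None = None \<longrightarrow>
            (z \<noteq> 0 \<longrightarrow> comp_adj p q f z =
               z * (\<Sum>w\<in>{w. phi_e p q (Some w) = Some z}. f w / (w * deriv (phi_e_c p q) w)))
            \<and> comp_adj p q f 0 = f 0)"
proof -
  interpret ratU p q d by unfold_locales (use assms in auto)
  show ?thesis by (rule final[OF assms(4,5,6)])
qed


end
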